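(* Let $\Lambda$ be a Legendrian knot in $(\mathbb{R}^3,dz-y\,dx)$ with generic Lagrangian projection, and let $\epsilon:(\mathcal{A}_\Lambda,\partial_\Lambda)\to(\mathbb{Z}_2,0)$ be an augmentation. Then \[ MC(z)-PC^\epsilon(z)=(z+1)R(z), \] where $R(z)=\sum_k\#\{\text{finite bars in }F^\bullet\mathrm{LCH}^\epsilon_k(\Lambda)\}\,z^k$.
   Context: $(\mathcal{A}_\Lambda,\partial_\Lambda)$ is the Chekanov–Eliashberg DGA over $\mathbb{Z}_2$ of $\Lambda$, generated by the Reeb chords (double points of the Lagrangian projection) $q_1,\dots,q_n$, with $\mathbb{Z}$-grading $|q_i|$. An augmentation is an algebra map $\epsilon:\mathcal{A}_\Lambda\to\mathbb{Z}_2$ vanishing on nonzero degrees with $\epsilon\circ\partial_\Lambda=0$; $\partial_1^\epsilon$ is the linearized differential (length-one part of $\phi^\epsilon\partial_\Lambda(\phi^\epsilon)^{-1}$, $\phi^\epsilon(q_i)=q_i+\epsilon(q_i)$) on the vector space $A_\Lambda$ with basis $q_1,\dots,q_n$, and $\mathrm{LCH}^\epsilon_k(\Lambda)=H_k(A_\Lambda,\partial^\epsilon_1)$. Morse–Chekanov polynomial: $MC(z)=\sum_k\#\{\text{Reeb chords of grading }k\}z^k$. Poincaré–Chekanov polynomial: $PC^\epsilon(z)=\sum_k\dim_{\mathbb{Z}_2}\mathrm{LCH}^\epsilon_k(\Lambda)z^k$. Each $q_i$ has height $h(q_i)=\int_{\gamma_i}(dz-y\,dx)>0$ over its Reeb chord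 $\gamma_i$; $\partial_1^\epsilon$ strictly decreases height. $F^\bullet\mathrm{LCH}^\epsilon_k(\Lambda)$ is the persistence module $t\mapsto H_k(A^t,\partial_1^\epsilon)$ with $A^t$ spanned by the $q_i$ with $h(q_i)\le t$ and transfer maps induced by inclusion; it decomposes uniquely as a direct sum of interval modules (its barcode), and a finite bar is a summand supported on a bounded interval. *)

theory Defs
  imports Complex_Main
begin

text \<open>Reeb chords are q_0,...,q_{n-1} (indices i < n); g i is the grading |q_i|,
  h i the height.  A word (monomial) is a list of chord indices; an element of the
  (noncommutative, unital, free) algebra over Z2 is a finite set of words
  (coefficient 1 exactly on the words in the set); the empty word is the unit.\<close>

definition xor_set :: "'a set \<Rightarrow> 'a set \<Rightarrow> 'a set" where
  "xor_set A B = (A - B) \<union> (B - A)"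

definition word_grade :: "(nat \<Rightarrow> int) \<Rightarrow> nat list \<Rightarrow> int" where
  "word_grade g w = sum_list (map g w)"

definition word_height :: "(nat \<Rightarrow> real) \<Rightarrow> nat list \<Rightarrow> real" where
  "word_height h w = sum_list (map h w)"

definition dword :: "(nat \<Rightarrow> nat list set) \<Rightarrow> nat list \<Rightarrow> nat list set" where
  "dword d w = {x. odd (card {(k, v). k < length w \<and> v \<in> d (w ! k) \<and>
                         take k w @ v @ drop (Suc k) w = x})}"

definition dpoly :: "(nat \<Rightarrow> nat list set) \<Rightarrow> nat list set \<Rightarrow> nat list set" where
  "dpoly d P = {x. odd (card {w \<in> P. x \<in> dword d w})}"

definition CE_dga :: "nat \<Rightarrow> (nat \<Rightarrow> int) \<Rightarrow> (nat \<Rightarrow> real) \<Rightarrow> (nat \<Rightarrow> nat list set) \<Rightarrow> bool" where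
  "CE_dga n g h d \<longleftrightarrow>
     (\<forall>i<n. h i > 0) \<and>
     (\<forall>i<n. finite (d i)) \<and>
     (\<forall>i<n. \<forall>w\<in>d i. set w \<subseteq> {..<n} \<and> word_grade g w = g i - 1 \<and> word_height h w < h i) \<and>
     (\<forall>i<n. dpoly d (d i) = {})"

text \<open>Augmentation eps : A -> Z2 (algebra map, determined by its values on generators):
  vanishes on generators of nonzero degree and satisfies eps o d = 0.\<close>
definition augmentation :: "nat \<Rightarrow> (nat \<Rightarrow> int) \<Rightarrow> (nat \<Rightarrow> nat list set) \<Rightarrow> (nat \<Rightarrow> bool) \<Rightarrow> bool" where
  "augmentation n g d eps \<longleftrightarrow>
     (\<forall>i<n. eps i \<longrightarrow> g i = 0) \<and>
     (\<forall>i<n. even (card {w \<in> d i. \<forall>j\<in>set w. eps j}))"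

text \<open>Linearized differential on generators: the length-one part of
  phi o d o phi^{-1}(q_i) = phi(d q_i), where phi(q_j) = q_j + eps(q_j).\<close>
definition lin_diff :: "(nat \<Rightarrow> nat list set) \<Rightarrow> (nat \<Rightarrow> bool) \<Rightarrow> nat \<Rightarrow> nat set" where
  "lin_diff d eps i = {j. odd (card {(w, k). w \<in> d i \<and> k < length w \<and> w ! k = j \<and>
                              (\<forall>m<length w. m \<noteq> k \<longrightarrow> eps (w ! m))})}"

text \<open>Vectors of A_Lambda are finite sets of generator indices (Z2 coefficients);
  linear extension of the linearized differential.\<close>
definition lin_D :: "(nat \<Rightarrow> nat list set) \<Rightarrow> (nat \<Rightarrow> bool) \<Rightarrow> nat set \<Rightarrow> nat set" where
  "lin_D d eps S = {j. odd (card {i \<in> S. j \<in> lin_diff d eps i})}"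

definition chains :: "nat \<Rightarrow> (nat \<Rightarrow> int) \<Rightarrow> (nat \<Rightarrow> bool) \<Rightarrow> int \<Rightarrow> nat set set" where
  "chains n g L k = {S. S \<subseteq> {i. i < n \<and> g i = k \<and> L i}}"

definition cycles where
  "cycles n g d eps L k = {S \<in> chains n g L k. lin_D d eps S = {}}"

definition boundaries where
  "boundaries n g d eps L k = lin_D d eps ` chains n g L (k + 1)"

definition homology :: "nat \<Rightarrow> (nat \<Rightarrow> int) \<Rightarrow> (nat \<Rightarrow> nat list set) \<Rightarrow> (nat \<Rightarrow> bool)
    \<Rightarrow> (nat \<Rightarrow> bool) \<Rightarrow> int \<Rightarrow> nat set set set" where
  "homology n g d eps L k =
     (\<lambda>z. (\<lambda>b. xor_set z b) ` boundaries n g d eps L k) ` cycles n g d eps L k"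

definition cadd :: "nat set set \<Rightarrow> nat set set \<Rightarrow> nat set set" where
  "cadd C1 C2 = {xor_set x y | x y. x \<in> C1 \<and> y \<in> C2}"

definition level :: "(nat \<Rightarrow> real) \<Rightarrow> real \<Rightarrow> nat \<Rightarrow> bool" where
  "level h t = (\<lambda>i. h i \<le> t)"

definition transfer where
  "transfer n g h d eps k t C =
     {xor_set x b | x b. x \<in> C \<and> b \<in> boundaries n g d eps (level h t) k}"

definition hom_dim where
  "hom_dim V = (THE m. \<exists>\<psi>. bij_betw \<psi> V {f :: nat \<Rightarrow> bool. \<forall>j. f j \<longrightarrow> j < m} \<and>
                      (\<forall>C1\<in>V. \<forall>C2\<in>V. \<psi> (cadd C1 C2) = (\<lambda>j. \<psi> C1 j \<noteq> \<psi> C2 j)))"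

definition real_interval :: "real set \<Rightarrow> bool" where
  "real_interval I \<longleftrightarrow> I \<noteq> {} \<and> (\<forall>a\<in>I. \<forall>b\<in>I. \<forall>x. a \<le> x \<and> x \<le> b \<longrightarrow> x \<in> I)"

text \<open>An isomorphism of persistence modules between t |-> H_k(A^t) and the direct sum of
  interval modules Z2_{I j}, j in J (J finite).\<close>
definition interval_decomposition where
  "interval_decomposition n g h d eps k J I \<phi> \<longleftrightarrow>
     finite J \<and> (\<forall>j\<in>J. real_interval (I j)) \<and>
     (\<forall>t. bij_betw (\<phi> t) (homology n g d eps (level h t) k)
                     {f. \<forall>j. f j \<longrightarrow> j \<in> J \<and> t \<in> I j}) \<and>
     (\<forall>t. \<forall>C1\<in>homology n g d eps (level h t) k. \<forall>C2\<in>homology n g d eps (level h t) k.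
          \<phi> t (cadd C1 C2) = (\<lambda>j. \<phi> t C1 j \<noteq> \<phi> t C2 j)) \<and>
     (\<forall>s t. s \<le> t \<longrightarrow> (\<forall>C\<in>homology n g d eps (level h s) k.
          \<phi> t (transfer n g h d eps k t C) = (\<lambda>j. \<phi> s C j \<and> t \<in> I j)))"

definition finite_bars :: "nat set \<Rightarrow> (nat \<Rightarrow> real set) \<Rightarrow> nat" where
  "finite_bars J I = card {j \<in> J. \<exists>a b. I j \<subseteq> {a..b}}"

definition MC_coeff :: "nat \<Rightarrow> (nat \<Rightarrow> int) \<Rightarrow> int \<Rightarrow> nat" where
  "MC_coeff n g k = card {i. i < n \<and> g i = k}"

definition PC_coeff where
  "PC_coeff n g d eps k = hom_dim (homology n g d eps (\<lambda>_. True) k)"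

end

theory Submission
  imports Defs "HOL-Library.Product_Lexorder"
begin


abbreviation xorop (infixl "\<oplus>" 65) where "xorop x y \<equiv> xor_set x y"

lemma xor_simps[simp]:
  "x \<oplus> {} = x" "{} \<oplus> x = x" "x \<oplus> x = {}"
  "x \<oplus> (x \<oplus> y) = y" "x \<oplus> y \<oplus> y = x"
  by (auto simp: xor_set_def)
lemma xor_comm: "x \<oplus> y = y \<oplus> x" by (auto simp: xor_set_def)
lemma xor_assoc: "x \<oplus> y \<oplus> z = x \<oplus> (y \<oplus> z)" by (auto simp: xor_set_def)
lemma xor_mem: "a \<in> x \<oplus> y \<longleftrightarrow> (a \<in> x) \<noteq> (a \<in> y)" by (auto simp: xor_set_def)
lemma xor_eq_empty: "x \<oplus> y = {} \<longleftrightarrow> x = y" by (auto simp: xor_set_def)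
lemma xor_sub: "x \<oplus> y \<subseteq> x \<union> y" by (auto simp: xor_set_def)
lemma finite_xor[simp]: "finite x \<Longrightarrow> finite y \<Longrightarrow> finite (x \<oplus> y)"
  by (auto simp: xor_set_def)

lemma odd_card_xor:
  assumes "finite A" "finite B"
  shows "odd (card {x\<in>A \<oplus> B. P x}) \<longleftrightarrow> (odd (card {x\<in>A. P x}) \<noteq> odd (card {x\<in>B. P x}))"
proof -
  let ?A = "{x\<in>A. P x}" and ?B = "{x\<in>B. P x}"
  have e: "{x\<in>A \<oplus> B. P x} = (?A - ?B) \<union> (?B - ?A)" by (auto simp: xor_set_def)
  have fa: "finite ?A" "finite ?B" using assms by auto
  have c: "card {x\<in>A \<oplus> B. P x} = card (?A - ?B) + card (?B - ?A)"
    unfolding e by (rule card_Un_disjoint) (use fa in auto)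
  have "card (?A - ?B) = card ?A - card (?A \<inter> ?B)" by (rule card_Diff_subset_Int) (use fa in auto)
  moreover have "card (?B - ?A) = card ?B - card (?A \<inter> ?B)"
    by (metis (no_types, lifting) card_Diff_subset_Int fa(1) finite_Int inf_commute)
  moreover have "card (?A \<inter> ?B) \<le> card ?A" "card (?A \<inter> ?B) \<le> card ?B"
    using fa by (auto intro: card_mono)
  ultimately show ?thesis using c by presburger
qed

definition psum :: "('a \<Rightarrow> 'b set) \<Rightarrow> 'a set \<Rightarrow> 'b set" where
  "psum F S = {j. odd (card {i\<in>S. j \<in> F i})}"

lemma psum_empty[simp]: "psum F {} = {}" by (simp add: psum_def)

lemma psum_xor: "finite S \<Longrightarrow> finite T \<Longrightarrow> psum F (S \<oplus> T) = psum F S \<oplus> psum F T"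
proof (rule set_eqI)
  fix j assume a: "finite S" "finite T"
  have "j \<in> psum F (S \<oplus> T) \<longleftrightarrow> odd (card {i\<in>S \<oplus> T. j \<in> F i})" by (simp only: psum_def mem_Collect_eq)
  also have "\<dots> \<longleftrightarrow> (odd (card {i\<in>S. j \<in> F i}) \<noteq> odd (card {i\<in>T. j \<in> F i}))" by (rule odd_card_xor[OF a])
  also have "\<dots> \<longleftrightarrow> j \<in> psum F S \<oplus> psum F T" by (simp add: psum_def xor_mem)
  finally show "j \<in> psum F (S \<oplus> T) \<longleftrightarrow> j \<in> psum F S \<oplus> psum F T" .
qed

lemma psum_insert: "finite S \<Longrightarrow> i \<notin> S \<Longrightarrow> psum F (insert i S) = F i \<oplus> psum F S"
proof -
  assume a: "finite S" "i \<notin> S"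
  have "insert i S = {i} \<oplus> S" using a by (auto simp: xor_set_def)
  then have "psum F (insert i S) = psum F {i} \<oplus> psum F S" using a psum_xor[of "{i}" S F] by simp
  moreover have "psum F {i} = F i" unfolding psum_def
  proof -
    have "\<And>j. {i' \<in> {i}. j \<in> F i'} = (if j \<in> F i then {i} else {})" by auto
    then show "{j. odd (card {i' \<in> {i}. j \<in> F i'})} = F i" by auto
  qed
  ultimately show ?thesis by simp
qed

lemma psum_sub: "psum F S \<subseteq> (\<Union>i\<in>S. F i)"
proof
  fix j assume "j \<in> psum F S"
  then have "odd (card {i\<in>S. j \<in> F i})" by (simp add: psum_def)
  then have "{i\<in>S. j \<in> F i} \<noteq> {}" by (metis card.empty even_zero)
  then obtain i where "i \<in> S" "j \<in> F i" by blast
  then show "j \<in> (\<Union>i\<in>S. F i)" by blast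
qed

lemma psum_finite: "finite S \<Longrightarrow> (\<And>i. i \<in> S \<Longrightarrow> finite (F i)) \<Longrightarrow> finite (psum F S)"
  by (rule finite_subset[OF psum_sub]) auto

definition subsp :: "'a set set \<Rightarrow> bool" where
  "subsp W \<longleftrightarrow> {} \<in> W \<and> (\<forall>x\<in>W. \<forall>y\<in>W. x \<oplus> y \<in> W)"

definition coset :: "'a set \<Rightarrow> 'a set set \<Rightarrow> 'a set set" where
  "coset z B = (\<lambda>b. z \<oplus> b) ` B"


lemma coset_card: "card (coset z B) = card B"
  unfolding coset_def by (rule card_image) (rule inj_onI, metis xor_simps(4))

lemma coset_eq_iff:
  assumes "subsp B" shows "coset z B = coset z' B \<longleftrightarrow> z \<oplus> z' \<in> B"
proof
  assume "coset z B = coset z' B"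
  then have "z \<in> coset z' B" using assms unfolding subsp_def coset_def
    by (metis image_eqI xor_simps(1))
  then obtain b where b: "b \<in> B" "z = z' \<oplus> b" unfolding coset_def by auto
  then have "z \<oplus> z' = b" by (auto simp: xor_set_def)
  then show "z \<oplus> z' \<in> B" using b by simp
next
  assume zz: "z \<oplus> z' \<in> B"
  show "coset z B = coset z' B" unfolding coset_def
  proof safe
    fix b assume "b \<in> B"
    then have "z \<oplus> z' \<oplus> b \<in> B" using assms zz unfolding subsp_def by blast
    moreover have "z \<oplus> b = z' \<oplus> (z \<oplus> z' \<oplus> b)" by (auto simp: xor_set_def)
    ultimately show "z \<oplus> b \<in> (\<oplus>) z' ` B" by blast
  next
    fix b assume "b \<in> B"
    then have "z \<oplus> z' \<oplus> b \<in> B" using assms zz unfolding subsp_def by blast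
    moreover have "z' \<oplus> b = z \<oplus> (z \<oplus> z' \<oplus> b)" by (auto simp: xor_set_def)
    ultimately show "z' \<oplus> b \<in> (\<oplus>) z ` B" by blast
  qed
qed

lemma coset_zero: "subsp B \<Longrightarrow> coset {} B = B"
  by (simp add: coset_def)

lemma coset_self: "subsp B \<Longrightarrow> z \<in> coset z B"
  unfolding coset_def subsp_def by (metis image_eqI xor_simps(1))

lemma fiber_count:
  assumes "finite A" "\<And>y. y \<in> f ` A \<Longrightarrow> card {x\<in>A. f x = y} = m"
  shows "card A = card (f ` A) * m"
proof -
  have "card A = (\<Sum>y\<in>f ` A. card {x\<in>A. f x = y})"
    using sum.image_gen[OF assms(1), of "\<lambda>_. 1::nat" f] by simp
  also have "\<dots> = card (f ` A) * m" using assms(2) by simp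
  finally show ?thesis .
qed

lemma coset_count:
  assumes W: "subsp W" "finite W" and B: "subsp B" "B \<subseteq> W"
  shows "card W = card ((\<lambda>z. coset z B) ` W) * card B"
proof (rule fiber_count[OF W(2)])
  fix y assume "y \<in> (\<lambda>z. coset z B) ` W"
  then obtain z0 where z0: "z0 \<in> W" "y = coset z0 B" by auto
  have "{x \<in> W. coset x B = y} = coset z0 B"
  proof (rule set_eqI, rule iffI)
    fix x assume "x \<in> {x \<in> W. coset x B = y}"
    then have "x \<oplus> z0 \<in> B" using coset_eq_iff[OF B(1)] z0 by simp
    moreover have "x = z0 \<oplus> (x \<oplus> z0)" by (auto simp: xor_set_def)
    ultimately show "x \<in> coset z0 B" unfolding coset_def by blast
  next
    fix x assume "x \<in> coset z0 B"
    then obtain b where b: "b \<in> B" "x = z0 \<oplus> b" unfolding coset_def by auto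
    have "x \<in> W" using b z0 B W unfolding subsp_def by blast
    moreover have "x \<oplus> z0 = b" using b by (auto simp: xor_set_def)
    ultimately show "x \<in> {x \<in> W. coset x B = y}" using coset_eq_iff[OF B(1)] z0 b by simp
  qed
  then show "card {x \<in> W. coset x B = y} = card B" using coset_card by simp
qed

lemma linear_count:
  assumes C: "subsp C" "finite C"
    and lin: "\<And>x y. x \<in> C \<Longrightarrow> y \<in> C \<Longrightarrow> D (x \<oplus> y) = D x \<oplus> D y"
  shows "card C = card (D ` C) * card {x\<in>C. D x = {}}"
proof (rule fiber_count[OF C(2)])
  fix y assume "y \<in> D ` C"
  then obtain z0 where z0: "z0 \<in> C" "y = D z0" by auto
  have "{x \<in> C. D x = y} = (\<lambda>b. z0 \<oplus> b) ` {x\<in>C. D x = {}}"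
  proof (rule set_eqI, rule iffI)
    fix x assume x: "x \<in> {x \<in> C. D x = y}"
    then have "D (z0 \<oplus> x) = {}" using lin z0 by simp
    moreover have "z0 \<oplus> x \<in> C" using x z0 C unfolding subsp_def by blast
    moreover have "x = z0 \<oplus> (z0 \<oplus> x)" by simp
    ultimately show "x \<in> (\<lambda>b. z0 \<oplus> b) ` {x\<in>C. D x = {}}" by blast
  next
    fix x assume "x \<in> (\<lambda>b. z0 \<oplus> b) ` {x\<in>C. D x = {}}"
    then obtain b where b: "b \<in> C" "D b = {}" "x = z0 \<oplus> b" by auto
    have "x \<in> C" using b z0 C unfolding subsp_def by blast
    moreover have "D x = y" using b lin z0 by simp
    ultimately show "x \<in> {x \<in> C. D x = y}" by simp
  qed
  moreover have "inj_on (\<lambda>b. z0 \<oplus> b) {x\<in>C. D x = {}}"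
    by (rule inj_onI) (metis xor_simps(4))
  ultimately show "card {x \<in> C. D x = y} = card {x\<in>C. D x = {}}"
    by (simp add: card_image)
qed

lemma card_funs: "finite A \<Longrightarrow> card {f :: 'a \<Rightarrow> bool. \<forall>j. f j \<longrightarrow> j \<in> A} = 2 ^ card A"
proof -
  assume fA: "finite A"
  have e: "{f :: 'a \<Rightarrow> bool. \<forall>j. f j \<longrightarrow> j \<in> A} = (\<lambda>S j. j \<in> S) ` Pow A"
  proof (rule set_eqI, rule iffI)
    fix f :: "'a \<Rightarrow> bool" assume "f \<in> {f. \<forall>j. f j \<longrightarrow> j \<in> A}"
    then have "{j. f j} \<in> Pow A" "f = (\<lambda>j. j \<in> {j. f j})" by auto
    then show "f \<in> (\<lambda>S j. j \<in> S) ` Pow A" by blast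
  qed auto
  have "inj_on (\<lambda>S j. j \<in> S) (Pow (A::'a set))"
  proof (rule inj_onI)
    fix S T :: "'a set" assume "(\<lambda>j. j \<in> S) = (\<lambda>j. j \<in> T)"
    then show "S = T" by (metis Collect_mem_eq)
  qed
  then show ?thesis unfolding e using card_Pow[of A] fA by (simp add: card_image)
qed


definition ae :: "(nat \<Rightarrow> bool) \<Rightarrow> nat list \<Rightarrow> bool" where
  "ae e w \<longleftrightarrow> (\<forall>b\<in>set w. e b)"

lemma ae_simps[simp]: "ae e [] = True" "ae e (a # w) = (e a \<and> ae e w)" "ae e (u @ y) = (ae e u \<and> ae e y)"
  by (auto simp: ae_def)

fun lc :: "(nat \<Rightarrow> bool) \<Rightarrow> nat \<Rightarrow> nat list \<Rightarrow> nat" where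
  "lc e l [] = 0"
| "lc e l (a # w) = (if e a then lc e l w else 0) + (if a = l \<and> ae e w then 1 else 0)"

lemma lc_append: "lc e l (u @ y) = (if ae e y then lc e l u else 0) + (if ae e u then lc e l y else 0)"
  by (induction u) auto

lemma lc_card:
  "card {k. k < length w \<and> w ! k = l \<and> ae e (take k w) \<and> ae e (drop (Suc k) w)} = lc e l w"
proof (induction w)
  case Nil then show ?case by simp
next
  case (Cons a w)
  let ?S = "{k. k < length w \<and> w ! k = l \<and> ae e (take k w) \<and> ae e (drop (Suc k) w)}"
  have e1: "{k. k < length (a # w) \<and> (a # w) ! k = l \<and> ae e (take k (a # w)) \<and> ae e (drop (Suc k) (a # w))}
     = (if a = l \<and> ae e w then {0::nat} else {}) \<union> Suc ` {k\<in>?S. e a}"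
  proof (rule set_eqI)
    fix k show "k \<in> {k. k < length (a # w) \<and> (a # w) ! k = l \<and> ae e (take k (a # w)) \<and> ae e (drop (Suc k) (a # w))}
      \<longleftrightarrow> k \<in> (if a = l \<and> ae e w then {0::nat} else {}) \<union> Suc ` {k\<in>?S. e a}"
      by (cases k) auto
  qed
  have fS: "finite ?S" by simp
  have "card ((if a = l \<and> ae e w then {0::nat} else {}) \<union> Suc ` {k\<in>?S. e a})
     = card (if a = l \<and> ae e w then {0::nat} else {}) + card (Suc ` {k\<in>?S. e a})"
    by (rule card_Un_disjoint) auto
  moreover have "card (Suc ` {k\<in>?S. e a}) = card {k\<in>?S. e a}" by (rule card_image) simp
  moreover have "card {k\<in>?S. e a} = (if e a then lc e l w else 0)" using Cons.IH by auto
  moreover have "card (if a = l \<and> ae e w then {0::nat} else {}) = (if a = l \<and> ae e w then 1 else 0)" by auto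
  ultimately show ?case using e1 by simp
qed

lemma others_iff:
  assumes "k < length w"
  shows "(\<forall>m<length w. m \<noteq> k \<longrightarrow> e (w ! m)) \<longleftrightarrow> (ae e (take k w) \<and> ae e (drop (Suc k) w))"
proof -
  have w: "w = take k w @ w ! k # drop (Suc k) w" using assms by (simp add: id_take_nth_drop)
  show ?thesis
  proof
    assume H: "\<forall>m<length w. m \<noteq> k \<longrightarrow> e (w ! m)"
    have "ae e (take k w)" unfolding ae_def
    proof
      fix b assume "b \<in> set (take k w)"
      then obtain m where "m < length (take k w)" "take k w ! m = b" by (auto simp: in_set_conv_nth)
      then show "e b" using H assms by auto
    qed
    moreover have "ae e (drop (Suc k) w)" unfolding ae_def
    proof
      fix b assume "b \<in> set (drop (Suc k) w)"
      then obtain m where "m < length (drop (Suc k) w)" "drop (Suc k) w ! m = b" by (auto simp: in_set_conv_nth)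
      then show "e b" using H assms by auto
    qed
    ultimately show "ae e (take k w) \<and> ae e (drop (Suc k) w)" ..
  next
    assume H: "ae e (take k w) \<and> ae e (drop (Suc k) w)"
    show "\<forall>m<length w. m \<noteq> k \<longrightarrow> e (w ! m)"
    proof (intro allI impI)
      fix m assume m: "m < length w" "m \<noteq> k"
      show "e (w ! m)"
      proof (cases "m < k")
        case True
        then have "w ! m \<in> set (take k w)" using m by (metis in_set_conv_nth length_take min_less_iff_conj nth_take)
        then show ?thesis using H by (auto simp: ae_def)
      next
        case False
        then have "m - Suc k < length (drop (Suc k) w)" "drop (Suc k) w ! (m - Suc k) = w ! m" using m by auto
        then have "w ! m \<in> set (drop (Suc k) w)" by (metis nth_mem)
        then show ?thesis using H by (auto simp: ae_def)
      qed
    qed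
  qed
qed


lemma sum_Sigma_split:
  "finite A \<Longrightarrow> (\<forall>a\<in>A. finite (B a)) \<Longrightarrow> (\<Sum>p\<in>Sigma A B. f p) = (\<Sum>a\<in>A. \<Sum>b\<in>B a. f (a, b))"
  by (subst sum.Sigma) auto

lemma even_Sigma:
  assumes "finite A" "\<forall>a\<in>A. finite (B a)" "\<forall>a\<in>A. even (\<Sum>b\<in>B a. f (a, b) :: nat)"
  shows "even (\<Sum>p\<in>Sigma A B. f p)"
  using assms by (simp add: sum_Sigma_split dvd_sum)

lemma sum_if_const: "finite A \<Longrightarrow> (\<Sum>v\<in>A. if P v then c else 0) = card {v\<in>A. P v} * (c::nat)"
proof -
  assume "finite A"
  moreover have "{v\<in>A. P v} = A \<inter> Collect P" by auto
  ultimately show ?thesis by (simp add: sum.If_cases)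
qed

lemma sum_group_card:
  assumes "finite A"
  shows "(\<Sum>p\<in>A. F (f p) :: nat) = (\<Sum>x\<in>f ` A. card {p\<in>A. f p = x} * F x)"
proof -
  have "(\<Sum>p\<in>A. F (f p)) = (\<Sum>x\<in>f ` A. \<Sum>p\<in>{p\<in>A. f p = x}. F (f p))"
    by (rule sum.image_gen[OF assms])
  also have "\<dots> = (\<Sum>x\<in>f ` A. card {p\<in>A. f p = x} * F x)"
    by (rule sum.cong) auto
  finally show ?thesis .
qed

locale ce =
  fixes n :: nat and g :: "nat \<Rightarrow> int" and h :: "nat \<Rightarrow> real"
    and d :: "nat \<Rightarrow> nat list set" and eps :: "nat \<Rightarrow> bool"
  assumes dga: "CE_dga n g h d" and aug: "augmentation n g d eps"
begin

lemma hpos: "i < n \<Longrightarrow> h i > 0" using dga by (simp add: CE_dga_def)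
lemma dfin: "i < n \<Longrightarrow> finite (d i)" using dga by (simp add: CE_dga_def)
lemma dprops: "i < n \<Longrightarrow> w \<in> d i \<Longrightarrow> set w \<subseteq> {..<n} \<and> word_grade g w = g i - 1 \<and> word_height h w < h i"
  using dga by (simp add: CE_dga_def)
lemma ddz: "i < n \<Longrightarrow> dpoly d (d i) = {}" using dga by (simp add: CE_dga_def)
lemma eps_g: "i < n \<Longrightarrow> eps i \<Longrightarrow> g i = 0" using aug by (simp add: augmentation_def)
lemma aug_even: "i < n \<Longrightarrow> even (card {w\<in>d i. ae eps w})"
  using aug by (simp add: augmentation_def ae_def)

lemma wlt: "i < n \<Longrightarrow> w \<in> d i \<Longrightarrow> k < length w \<Longrightarrow> w ! k < n"
  using dprops by (meson lessThan_iff nth_mem subsetD)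

definition Aset :: "nat \<Rightarrow> nat \<Rightarrow> (nat list \<times> nat) set" where
  "Aset i j = {(w, k). w \<in> d i \<and> k < length w \<and> w ! k = j \<and> (\<forall>m<length w. m \<noteq> k \<longrightarrow> eps (w ! m))}"

lemma lin_diff_Aset: "lin_diff d eps i = {j. odd (card (Aset i j))}"
  by (simp add: lin_diff_def Aset_def)

lemma card_Aset: assumes "i < n" shows "card (Aset i j) = (\<Sum>w\<in>d i. lc eps j w)"
proof -
  have "Aset i j = (SIGMA w:d i. {k. k < length w \<and> w ! k = j \<and> ae eps (take k w) \<and> ae eps (drop (Suc k) w)})"
    unfolding Aset_def using others_iff by auto
  then show ?thesis using dfin[OF assms] by (simp add: lc_card)
qed

lemma lin_d_single:
  assumes i: "i < n"
  shows "even (card {j \<in> lin_diff d eps i. l \<in> lin_diff d eps j})"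
proof -
  define spl where "spl = (\<lambda>(w::nat list, (k::nat, v::nat list)). take k w @ v @ drop (Suc k) w)"
  define Tw where "Tw = (\<lambda>w::nat list. SIGMA k:{..<length w}. d (w ! k))"
  define Tr where "Tr = (SIGMA w:d i. Tw w)"
  have finTw: "\<And>w. w \<in> d i \<Longrightarrow> finite (Tw w)"
    unfolding Tw_def using wlt[OF i] dfin by (auto intro!: finite_SigmaI)
  have finTr: "finite Tr" unfolding Tr_def using finTw dfin[OF i] by (auto intro!: finite_SigmaI)
  have s1: "even (\<Sum>\<tau>\<in>Tr. lc eps l (spl \<tau>))"
  proof -
    have eq: "(\<Sum>\<tau>\<in>Tr. lc eps l (spl \<tau>)) = (\<Sum>x\<in>spl ` Tr. card {\<tau>\<in>Tr. spl \<tau> = x} * lc eps l x)"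
      by (rule sum_group_card[OF finTr])
    have "even (card {\<tau>\<in>Tr. spl \<tau> = x})" for x
    proof -
      have "{\<tau>\<in>Tr. spl \<tau> = x} = (SIGMA w:d i. {kv\<in>Tw w. spl (w, kv) = x})" by (auto simp: Tr_def)
      then have c: "card {\<tau>\<in>Tr. spl \<tau> = x} = (\<Sum>w\<in>d i. card {kv\<in>Tw w. spl (w, kv) = x})"
        using finTw dfin[OF i] by simp
      have "\<And>w. {kv\<in>Tw w. spl (w, kv) = x} = {(k, v). k < length w \<and> v \<in> d (w ! k) \<and> take k w @ v @ drop (Suc k) w = x}"
        by (auto simp: Tw_def spl_def)
      then have "{w\<in>d i. odd (card {kv\<in>Tw w. spl (w, kv) = x})} = {w\<in>d i. x \<in> dword d w}"
        by (simp add: dword_def)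
      moreover have "x \<notin> dpoly d (d i)" using ddz[OF i] by simp
      ultimately have "even (card {w\<in>d i. odd (card {kv\<in>Tw w. spl (w, kv) = x})})"
        by (simp add: dpoly_def)
      then show ?thesis unfolding c using even_sum_iff[OF dfin[OF i]] by blast
    qed
    then show ?thesis unfolding eq by (simp add: dvd_sum)
  qed
  define oth where "oth = (\<lambda>w k. ae eps (take k w) \<and> ae eps (drop (Suc k) w))"
  define N where "N = (\<lambda>w k. lc eps l (take k w @ drop (Suc k) w))"
  have s2: "lc eps l (spl (w, (k, v))) = (if oth w k then lc eps l v else 0) + (if ae eps v then N w k else 0)" for w k v
    by (simp add: spl_def oth_def N_def lc_append)
  have s3: "even (\<Sum>\<tau>\<in>Tr. (\<lambda>(w, (k, v)). if ae eps v then N w k else 0) \<tau>)"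
  proof -
    have "(\<Sum>\<tau>\<in>Tr. (\<lambda>(w, (k, v)). if ae eps v then N w k else 0) \<tau>)
        = (\<Sum>w\<in>d i. \<Sum>kv\<in>Tw w. (\<lambda>(w, (k, v)). if ae eps v then N w k else 0) (w, kv))"
      unfolding Tr_def using finTw dfin[OF i] by (simp add: sum_Sigma_split)
    also have "\<dots> = (\<Sum>w\<in>d i. \<Sum>k\<in>{..<length w}. \<Sum>v\<in>d (w ! k). if ae eps v then N w k else 0)"
    proof (rule sum.cong[OF refl])
      fix w assume w: "w \<in> d i"
      show "(\<Sum>kv\<in>Tw w. (\<lambda>(w, (k, v)). if ae eps v then N w k else 0) (w, kv))
          = (\<Sum>k\<in>{..<length w}. \<Sum>v\<in>d (w ! k). if ae eps v then N w k else 0)"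
        unfolding Tw_def using dfin wlt[OF i w] by (subst sum_Sigma_split) auto
    qed
    also have "\<dots> = (\<Sum>w\<in>d i. \<Sum>k\<in>{..<length w}. card {v\<in>d (w ! k). ae eps v} * N w k)"
    proof (intro sum.cong[OF refl])
      fix w k assume w: "w \<in> d i" and k: "k \<in> {..<length w}"
      show "(\<Sum>v\<in>d (w ! k). if ae eps v then N w k else 0) = card {v\<in>d (w ! k). ae eps v} * N w k"
        using sum_if_const[OF dfin[OF wlt[OF i w]]] k by simp
    qed
    finally have e: "(\<Sum>\<tau>\<in>Tr. (\<lambda>(w, (k, v)). if ae eps v then N w k else 0) \<tau>)
       = (\<Sum>w\<in>d i. \<Sum>k\<in>{..<length w}. card {v\<in>d (w ! k). ae eps v} * N w k)" .
    have "\<forall>w\<in>d i. \<forall>k\<in>{..<length w}. even (card {v\<in>d (w ! k). ae eps v} * N w k)"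
      using aug_even wlt[OF i] by auto
    then show ?thesis unfolding e by (intro dvd_sum) auto
  qed
  have s4: "even (\<Sum>\<tau>\<in>Tr. (\<lambda>(w, (k, v)). if oth w k then lc eps l v else 0) \<tau>)"
  proof -
    have "(\<Sum>\<tau>\<in>Tr. lc eps l (spl \<tau>)) = (\<Sum>\<tau>\<in>Tr. (\<lambda>(w, (k, v)). if oth w k then lc eps l v else 0) \<tau>)
        + (\<Sum>\<tau>\<in>Tr. (\<lambda>(w, (k, v)). if ae eps v then N w k else 0) \<tau>)"
      by (subst sum.distrib[symmetric]) (rule sum.cong, auto simp: s2)
    then show ?thesis using s1 s3 by presburger
  qed
  define WK where "WK = (SIGMA w:d i. {..<length w})"
  define c where "c = (\<lambda>j. card (Aset j l))"
  have finWK: "finite WK" unfolding WK_def using dfin[OF i] by auto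
  have s5: "(\<Sum>\<tau>\<in>Tr. (\<lambda>(w, (k, v)). if oth w k then lc eps l v else 0) \<tau>)
          = (\<Sum>p\<in>WK. (\<lambda>(w, k). if oth w k then c (w ! k) else 0) p)"
  proof -
    have "(\<Sum>\<tau>\<in>Tr. (\<lambda>(w, (k, v)). if oth w k then lc eps l v else 0) \<tau>)
        = (\<Sum>w\<in>d i. \<Sum>kv\<in>Tw w. (\<lambda>(w, (k, v)). if oth w k then lc eps l v else 0) (w, kv))"
      unfolding Tr_def using finTw dfin[OF i] by (simp add: sum_Sigma_split)
    also have "\<dots> = (\<Sum>w\<in>d i. \<Sum>k\<in>{..<length w}. \<Sum>v\<in>d (w ! k). if oth w k then lc eps l v else 0)"
    proof (rule sum.cong[OF refl])
      fix w assume w: "w \<in> d i"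
      show "(\<Sum>kv\<in>Tw w. (\<lambda>(w, (k, v)). if oth w k then lc eps l v else 0) (w, kv))
          = (\<Sum>k\<in>{..<length w}. \<Sum>v\<in>d (w ! k). if oth w k then lc eps l v else 0)"
        unfolding Tw_def using dfin wlt[OF i w] by (subst sum_Sigma_split) auto
    qed
    also have "\<dots> = (\<Sum>w\<in>d i. \<Sum>k\<in>{..<length w}. if oth w k then c (w ! k) else 0)"
    proof (intro sum.cong[OF refl])
      fix w k assume w: "w \<in> d i" and k: "k \<in> {..<length w}"
      show "(\<Sum>v\<in>d (w ! k). if oth w k then lc eps l v else 0) = (if oth w k then c (w ! k) else 0)"
        using card_Aset[OF wlt[OF i w]] k by (simp add: c_def)
    qed
    also have "\<dots> = (\<Sum>p\<in>WK. (\<lambda>(w, k). if oth w k then c (w ! k) else 0) p)"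
      unfolding WK_def using dfin[OF i] by (simp add: sum_Sigma_split)
    finally show ?thesis .
  qed
  define AA where "AA = {p\<in>WK. oth (fst p) (snd p)}"
  define f where "f = (\<lambda>p::nat list \<times> nat. fst p ! snd p)"
  have finAA: "finite AA" unfolding AA_def using finWK by simp
  have AAj: "{p\<in>AA. f p = j} = Aset i j" for j
  proof (rule set_eqI)
    fix p :: "nat list \<times> nat"
    obtain w k where p: "p = (w, k)" by fastforce
    show "p \<in> {p\<in>AA. f p = j} \<longleftrightarrow> p \<in> Aset i j"
      unfolding p AA_def WK_def Aset_def f_def oth_def using others_iff[of k w eps] by auto
  qed
  have s6: "(\<Sum>p\<in>WK. (\<lambda>(w, k). if oth w k then c (w ! k) else 0) p) = (\<Sum>j\<in>f ` AA. card (Aset i j) * c j)"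
  proof -
    have "(\<Sum>p\<in>WK. (\<lambda>(w, k). if oth w k then c (w ! k) else 0) p) = (\<Sum>p\<in>AA. c (f p))"
      unfolding AA_def f_def using finWK by (simp add: sum.inter_filter case_prod_beta)
    also have "\<dots> = (\<Sum>j\<in>f ` AA. card {p\<in>AA. f p = j} * c j)" by (rule sum_group_card[OF finAA])
    finally show ?thesis by (simp add: AAj)
  qed
  have E: "even (\<Sum>j\<in>f ` AA. card (Aset i j) * c j)" using s4 unfolding s5 s6 .
  have fi: "finite (f ` AA)" using finAA by simp
  have X: "even (card {j\<in>f ` AA. odd (card (Aset i j) * c j)})"
    using iffD1[OF even_sum_iff[OF fi] E] .
  have Y: "{j\<in>f ` AA. odd (card (Aset i j) * c j)} = {j \<in> lin_diff d eps i. l \<in> lin_diff d eps j}"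
  proof (rule set_eqI, rule iffI)
    fix j assume "j \<in> {j\<in>f ` AA. odd (card (Aset i j) * c j)}"
    then show "j \<in> {j \<in> lin_diff d eps i. l \<in> lin_diff d eps j}"
      by (simp add: lin_diff_Aset c_def)
  next
    fix j assume j: "j \<in> {j \<in> lin_diff d eps i. l \<in> lin_diff d eps j}"
    then have "odd (card (Aset i j))" by (simp add: lin_diff_Aset)
    then have "Aset i j \<noteq> {}" by (metis card.empty even_zero)
    then obtain p where "p \<in> Aset i j" by blast
    then have "p \<in> AA" "f p = j" using AAj[of j] by auto
    then have "j \<in> f ` AA" by blast
    then show "j \<in> {j\<in>f ` AA. odd (card (Aset i j) * c j)}" using j by (simp add: lin_diff_Aset c_def)
  qed
  show ?thesis using X unfolding Y .
qed

end


lemma sum_list_zero_map: "\<forall>b\<in>set xs. f b = (0::'a::monoid_add) \<Longrightarrow> sum_list (map f xs) = 0"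
  by (induction xs) auto

context ce begin

lemma lin_diff_props:
  assumes i: "i < n" and j: "j \<in> lin_diff d eps i"
  shows "j < n \<and> g j = g i - 1 \<and> h j < h i"
proof -
  have "odd (card (Aset i j))" using j by (simp add: lin_diff_Aset)
  then have "Aset i j \<noteq> {}" by (metis card.empty even_zero)
  then obtain w k where wk: "w \<in> d i" "k < length w" "w ! k = j" "\<forall>m<length w. m \<noteq> k \<longrightarrow> eps (w ! m)"
    unfolding Aset_def by blast
  have P: "set w \<subseteq> {..<n}" "word_grade g w = g i - 1" "word_height h w < h i" using dprops[OF i wk(1)] by auto
  have o: "ae eps (take k w)" "ae eps (drop (Suc k) w)" using others_iff[OF wk(2)] wk(4) by auto
  have w: "w = take k w @ w ! k # drop (Suc k) w" using wk(2) by (simp add: id_take_nth_drop)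
  have sub: "set (take k w) \<subseteq> {..<n}" "set (drop (Suc k) w) \<subseteq> {..<n}"
    using P(1) set_take_subset set_drop_subset by fastforce+
  have g0: "sum_list (map g (take k w)) = 0" "sum_list (map g (drop (Suc k) w)) = 0"
    using o sub eps_g unfolding ae_def by (auto intro!: sum_list_zero_map)
  have h0: "sum_list (map h (take k w)) \<ge> 0" "sum_list (map h (drop (Suc k) w)) \<ge> 0"
  proof -
    have "\<forall>x\<in>set (map h (take k w)). 0 \<le> x" "\<forall>x\<in>set (map h (drop (Suc k) w)). 0 \<le> x"
      using sub hpos by (auto intro: less_imp_le)
    then show "sum_list (map h (take k w)) \<ge> 0" "sum_list (map h (drop (Suc k) w)) \<ge> 0"
      by (metis (no_types, lifting) sum_list_nonneg)+
  qed
  have "word_grade g w = g j"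
    unfolding word_grade_def using g0 wk(3) by (subst w) simp
  moreover have "word_height h w \<ge> h j"
    unfolding word_height_def using h0 wk(3) by (subst w) simp
  moreover have "j < n" using P(1) wk(2,3) by (metis lessThan_iff nth_mem subsetD)
  ultimately show ?thesis using P by auto
qed

lemma lin_diff_fin: "i < n \<Longrightarrow> finite (lin_diff d eps i)"
  by (rule finite_subset[of _ "{..<n}"]) (auto dest: lin_diff_props)

lemma lin_D_psum: "lin_D d eps S = psum (lin_diff d eps) S"
  by (simp add: lin_D_def psum_def)

lemma lin_D_xor: "finite S \<Longrightarrow> finite T \<Longrightarrow> lin_D d eps (S \<oplus> T) = lin_D d eps S \<oplus> lin_D d eps T"
  by (simp add: lin_D_psum psum_xor)

lemma lin_D_empty[simp]: "lin_D d eps {} = {}" by (simp add: lin_D_psum)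

lemma lin_D_mem: "j \<in> lin_D d eps S \<Longrightarrow> \<exists>i\<in>S. j \<in> lin_diff d eps i"
  using psum_sub[of "lin_diff d eps" S] by (auto simp: lin_D_psum)

lemma lin_D_fin: "S \<subseteq> {..<n} \<Longrightarrow> finite (lin_D d eps S)"
  unfolding lin_D_psum by (rule psum_finite) (auto intro: finite_subset lin_diff_fin)

lemma dd_single: "i < n \<Longrightarrow> lin_D d eps (lin_diff d eps i) = {}"
  unfolding lin_D_def using lin_d_single by auto

lemma dd_zero: "S \<subseteq> {..<n} \<Longrightarrow> lin_D d eps (lin_D d eps S) = {}"
proof -
  assume S: "S \<subseteq> {..<n}"
  then have "finite S" by (rule finite_subset) simp
  then show ?thesis using S
  proof (induction S rule: finite_induct)
    case empty then show ?case by simp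
  next
    case (insert i S)
    have e: "lin_D d eps (insert i S) = lin_diff d eps i \<oplus> lin_D d eps S"
      unfolding lin_D_psum using insert by (simp add: psum_insert)
    have "lin_D d eps (lin_D d eps (insert i S)) = lin_D d eps (lin_diff d eps i) \<oplus> lin_D d eps (lin_D d eps S)"
      unfolding e using insert lin_diff_fin lin_D_fin by (intro lin_D_xor) auto
    then show ?case using insert dd_single by simp
  qed
qed

definition gens :: "(nat \<Rightarrow> bool) \<Rightarrow> int \<Rightarrow> nat set" where
  "gens L k = {i. i < n \<and> g i = k \<and> L i}"

lemma gens_fin[simp]: "finite (gens L k)" unfolding gens_def by simp
lemma gens_lt: "gens L k \<subseteq> {..<n}" unfolding gens_def by auto

lemma chains_eq: "chains n g L k = Pow (gens L k)"
  by (auto simp: chains_def gens_def)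

lemma subsp_Pow: "subsp (Pow A)"
  unfolding subsp_def by (auto simp: xor_set_def)

lemma chains_sub: "S \<in> chains n g L k \<Longrightarrow> S \<subseteq> {..<n}"
  unfolding chains_eq using gens_lt by blast

lemma chains_fin: "S \<in> chains n g L k \<Longrightarrow> finite S"
  by (meson chains_sub finite_lessThan finite_subset)

lemma subsp_chains: "subsp (chains n g L k)"
  unfolding chains_eq by (rule subsp_Pow)

lemma finite_chains: "finite (chains n g L k)"
  unfolding chains_eq by simp

lemma subsp_cycles: "subsp (cycles n g d eps L k)"
proof -
  have "x \<oplus> y \<in> cycles n g d eps L k" if "x \<in> cycles n g d eps L k" "y \<in> cycles n g d eps L k" for x y
  proof -
    have c: "x \<in> chains n g L k" "y \<in> chains n g L k" "lin_D d eps x = {}" "lin_D d eps y = {}"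
      using that by (auto simp: cycles_def)
    then have "x \<oplus> y \<in> chains n g L k" using subsp_chains[of L k] unfolding subsp_def by blast
    moreover have "lin_D d eps (x \<oplus> y) = {}" using c chains_fin lin_D_xor by simp
    ultimately show ?thesis by (simp add: cycles_def)
  qed
  moreover have "{} \<in> cycles n g d eps L k" using subsp_chains[of L k] unfolding subsp_def cycles_def by simp
  ultimately show ?thesis unfolding subsp_def by blast
qed

lemma subsp_boundaries: "subsp (boundaries n g d eps L k)"
proof -
  have "{} \<in> boundaries n g d eps L k" unfolding boundaries_def
    using subsp_chains[of L "k+1"] unfolding subsp_def by (metis image_eqI lin_D_empty)
  moreover have "x \<oplus> y \<in> boundaries n g d eps L k" if xy: "x \<in> boundaries n g d eps L k" "y \<in> boundaries n g d eps L k" for x y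
  proof -
    obtain S T where "S \<in> chains n g L (k+1)" "T \<in> chains n g L (k+1)" "x = lin_D d eps S" "y = lin_D d eps T"
      using xy unfolding boundaries_def by auto
    moreover then have "S \<oplus> T \<in> chains n g L (k+1)" using subsp_chains[of L "k+1"] unfolding subsp_def by blast
    ultimately show ?thesis unfolding boundaries_def using chains_fin by (metis image_eqI lin_D_xor)
  qed
  ultimately show ?thesis unfolding subsp_def by blast
qed

definition downcl :: "(nat \<Rightarrow> bool) \<Rightarrow> bool" where
  "downcl L \<longleftrightarrow> (\<forall>i j. i < n \<longrightarrow> j < n \<longrightarrow> h j < h i \<longrightarrow> L i \<longrightarrow> L j)"

lemma downcl_level: "downcl (level h t)" unfolding downcl_def level_def by auto
lemma downcl_True: "downcl (\<lambda>_. True)" unfolding downcl_def by auto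

lemma lin_D_chains:
  assumes "downcl L" "S \<in> chains n g L (k+1)"
  shows "lin_D d eps S \<in> chains n g L k"
proof -
  have "j \<in> gens L k" if jm: "j \<in> lin_D d eps S" for j
  proof -
    obtain i where i: "i \<in> S" "j \<in> lin_diff d eps i" using lin_D_mem[OF jm] by blast
    have ig: "i < n" "g i = k + 1" "L i" using i(1) assms(2) by (auto simp: chains_eq gens_def)
    have "j < n \<and> g j = g i - 1 \<and> h j < h i" by (rule lin_diff_props[OF ig(1) i(2)])
    then show ?thesis using ig assms(1) unfolding downcl_def gens_def by auto
  qed
  then show ?thesis by (auto simp: chains_eq)
qed

lemma bd_sub_cyc:
  assumes "downcl L"
  shows "boundaries n g d eps L k \<subseteq> cycles n g d eps L k"
proof
  fix b assume "b \<in> boundaries n g d eps L k"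
  then obtain S where S: "S \<in> chains n g L (k+1)" "b = lin_D d eps S" unfolding boundaries_def by auto
  have "b \<in> chains n g L k" using lin_D_chains[OF assms S(1)] S(2) by simp
  moreover have "lin_D d eps b = {}" using S dd_zero chains_sub by simp
  ultimately show "b \<in> cycles n g d eps L k" by (simp add: cycles_def)
qed

lemma finite_cycles: "finite (cycles n g d eps L k)"
  using finite_chains[of L k] unfolding cycles_def by simp

lemma finite_boundaries: "finite (boundaries n g d eps L k)"
  using finite_chains[of L "k+1"] unfolding boundaries_def by simp

lemma homology_eq: "homology n g d eps L k = (\<lambda>z. coset z (boundaries n g d eps L k)) ` cycles n g d eps L k"
  by (simp add: homology_def coset_def)

end


definition Fs :: "nat set \<Rightarrow> (nat \<Rightarrow> bool) set" where
  "Fs A = {f. \<forall>j. f j \<longrightarrow> j \<in> A}"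

lemma cadd_coset: "subsp B \<Longrightarrow> cadd (coset x B) (coset y B) = coset (x \<oplus> y) B"
proof -
  assume B: "subsp B"
  show ?thesis
  proof (rule set_eqI, rule iffI)
    fix u assume "u \<in> cadd (coset x B) (coset y B)"
    then obtain b1 b2 where b: "b1 \<in> B" "b2 \<in> B" "u = (x \<oplus> b1) \<oplus> (y \<oplus> b2)"
      unfolding cadd_def coset_def by blast
    then have "b1 \<oplus> b2 \<in> B" using B unfolding subsp_def by blast
    moreover have "u = (x \<oplus> y) \<oplus> (b1 \<oplus> b2)" using b(3) by (auto simp: xor_set_def)
    ultimately show "u \<in> coset (x \<oplus> y) B" unfolding coset_def by blast
  next
    fix u assume "u \<in> coset (x \<oplus> y) B"
    then obtain b where b: "b \<in> B" "u = (x \<oplus> y) \<oplus> b" unfolding coset_def by blast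
    have "u = (x \<oplus> b) \<oplus> y" using b(2) by (auto simp: xor_set_def)
    moreover have "x \<oplus> b \<in> coset x B" using b unfolding coset_def by blast
    moreover have "y \<in> coset y B" by (rule coset_self[OF B])
    ultimately show "u \<in> cadd (coset x B) (coset y B)" unfolding cadd_def by blast
  qed
qed

context ce begin

definition lev :: "real \<Rightarrow> nat set" where "lev t = {i. i < n \<and> h i \<le> t}"

lemma lev_iff: "lev s = lev t \<Longrightarrow> i < n \<Longrightarrow> h i \<le> s \<longleftrightarrow> h i \<le> t"
proof -
  assume e: "lev s = lev t" and i: "i < n"
  have "i \<in> lev s \<longleftrightarrow> i \<in> lev t" using e by simp
  then show ?thesis using i by (simp add: lev_def)
qed

lemma gens_level_eq: "lev s = lev t \<Longrightarrow> gens (level h s) k' = gens (level h t) k'"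
  unfolding gens_def level_def using lev_iff by blast

lemma chains_level_eq: "lev s = lev t \<Longrightarrow> chains n g (level h s) k' = chains n g (level h t) k'"
proof -
  assume e: "lev s = lev t"
  show ?thesis by (simp only: chains_eq gens_level_eq[OF e])
qed

lemma level_eq_all:
  assumes "\<forall>i<n. h i \<le> t"
  shows "chains n g (level h t) k' = chains n g (\<lambda>_. True) k'"
  unfolding chains_eq gens_def level_def using assms by auto

lemma chains_mono: "s \<le> t \<Longrightarrow> chains n g (level h s) k' \<subseteq> chains n g (level h t) k'"
  unfolding chains_def level_def by auto

lemma bd_mono: "s \<le> t \<Longrightarrow> boundaries n g d eps (level h s) k' \<subseteq> boundaries n g d eps (level h t) k'"
  unfolding boundaries_def using chains_mono by blast

lemma cyc_mono: "s \<le> t \<Longrightarrow> cycles n g d eps (level h s) k' \<subseteq> cycles n g d eps (level h t) k'"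
  unfolding cycles_def using chains_mono by blast

end

locale dec = ce +
  fixes k :: int and J :: "nat set" and I :: "nat \<Rightarrow> real set"
    and \<phi> :: "real \<Rightarrow> nat set set \<Rightarrow> nat \<Rightarrow> bool"
  assumes D: "interval_decomposition n g h d eps k J I \<phi>"
begin

abbreviation "V t \<equiv> homology n g d eps (level h t) k"
abbreviation "Bd t \<equiv> boundaries n g d eps (level h t) k"
abbreviation "Zc t \<equiv> cycles n g d eps (level h t) k"
definition Jt :: "real \<Rightarrow> nat set" where "Jt t = {j\<in>J. t \<in> I j}"

lemma finJ: "finite J" using D by (simp add: interval_decomposition_def)
lemma finJt: "finite (Jt t)" using finJ by (simp add: Jt_def)
lemma intv: "j \<in> J \<Longrightarrow> real_interval (I j)" using D by (simp add: interval_decomposition_def)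
lemma phibij: "bij_betw (\<phi> t) (V t) (Fs (Jt t))"
proof -
  have "Fs (Jt t) = {f. \<forall>j. f j \<longrightarrow> j \<in> J \<and> t \<in> I j}" by (auto simp: Fs_def Jt_def)
  then show ?thesis using D by (simp add: interval_decomposition_def)
qed
lemma phiadd: "C1 \<in> V t \<Longrightarrow> C2 \<in> V t \<Longrightarrow> \<phi> t (cadd C1 C2) = (\<lambda>j. \<phi> t C1 j \<noteq> \<phi> t C2 j)"
  using D by (simp add: interval_decomposition_def)
lemma phitr: "s \<le> t \<Longrightarrow> C \<in> V s \<Longrightarrow> \<phi> t (transfer n g h d eps k t C) = (\<lambda>j. \<phi> s C j \<and> t \<in> I j)"
proof -
  assume a: "s \<le> t" "C \<in> V s"
  have "\<forall>s t. s \<le> t \<longrightarrow> (\<forall>C\<in>V s. \<phi> t (transfer n g h d eps k t C) = (\<lambda>j. \<phi> s C j \<and> t \<in> I j))"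
    using D unfolding interval_decomposition_def by (elim conjE) assumption
  then show ?thesis using a by simp
qed

lemma subspB: "subsp (Bd t)" by (rule subsp_boundaries)
lemma subspZ: "subsp (Zc t)" by (rule subsp_cycles)
lemma BZ: "Bd t \<subseteq> Zc t" by (rule bd_sub_cyc[OF downcl_level])

lemma coset_in_V: "z \<in> Zc t \<Longrightarrow> coset z (Bd t) \<in> V t"
  by (simp add: homology_eq)

lemma zero_in_V: "Bd t \<in> V t"
proof -
  have "{} \<in> Zc t" using subspZ unfolding subsp_def by blast
  then show ?thesis using coset_in_V coset_zero[OF subspB] by metis
qed

lemma phi_zero: "\<phi> t (Bd t) = (\<lambda>_. False)"
proof -
  have "cadd (Bd t) (Bd t) = Bd t" using cadd_coset[OF subspB[of t], of "{}" "{}"] coset_zero[OF subspB] by simp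
  then have "\<phi> t (Bd t) = (\<lambda>j. \<phi> t (Bd t) j \<noteq> \<phi> t (Bd t) j)" using phiadd[OF zero_in_V zero_in_V] by metis
  then show ?thesis by (metis (full_types))
qed

lemma transfer_coset:
  assumes "s \<le> t"
  shows "transfer n g h d eps k t (coset z (Bd s)) = coset z (Bd t)"
proof (rule set_eqI, rule iffI)
  fix u assume "u \<in> transfer n g h d eps k t (coset z (Bd s))"
  then obtain b1 b where b: "b1 \<in> Bd s" "b \<in> Bd t" "u = (z \<oplus> b1) \<oplus> b"
    unfolding transfer_def coset_def by blast
  have "b1 \<in> Bd t" using b(1) bd_mono[OF assms] by blast
  then have "b1 \<oplus> b \<in> Bd t" using b(2) subspB unfolding subsp_def by blast
  moreover have "u = z \<oplus> (b1 \<oplus> b)" using b(3) by (auto simp: xor_set_def)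
  ultimately show "u \<in> coset z (Bd t)" unfolding coset_def by blast
next
  fix u assume "u \<in> coset z (Bd t)"
  then obtain b where b: "b \<in> Bd t" "u = z \<oplus> b" unfolding coset_def by blast
  have "z \<oplus> {} \<in> coset z (Bd s)" using subspB unfolding coset_def subsp_def by blast
  then show "u \<in> transfer n g h d eps k t (coset z (Bd s))"
    unfolding transfer_def using b by force
qed

lemma card_V: "card (V t) = 2 ^ card (Jt t)"
  using bij_betw_same_card[OF phibij[of t]] card_funs[OF finJt, of t] by (simp add: Fs_def)

lemma card_Z: "card (Zc t) = card (V t) * card (Bd t)"
  using coset_count[OF subspZ finite_cycles subspB BZ] by (simp add: homology_eq)

lemma V_lev: "lev s = lev t \<Longrightarrow> V s = V t \<and> Bd s = Bd t \<and> Zc s = Zc t"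
  using chains_level_eq[of s t] unfolding homology_def boundaries_def cycles_def by simp

lemma Jt_const_le:
  assumes st: "s \<le> t" and l: "lev s = lev t"
  shows "Jt s = Jt t"
proof -
  have VV: "V s = V t" "Bd s = Bd t" using V_lev[OF l] by auto
  have tr: "\<phi> t C = (\<lambda>j. \<phi> s C j \<and> t \<in> I j)" if C: "C \<in> V s" for C
  proof -
    obtain z where z: "z \<in> Zc s" "C = coset z (Bd s)" using C by (auto simp: homology_eq)
    have "transfer n g h d eps k t C = C" using z transfer_coset[OF st] VV by simp
    then show ?thesis using phitr[OF st C] by simp
  qed
  show ?thesis
  proof (rule set_eqI, rule iffI)
    fix j assume j: "j \<in> Jt s"
    have "(\<lambda>j'. j' = j) \<in> Fs (Jt s)" using j by (simp add: Fs_def)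
    then obtain C where C: "C \<in> V s" "\<phi> s C = (\<lambda>j'. j' = j)"
      using phibij[of s] by (metis bij_betw_iff_bijections)
    show "j \<in> Jt t"
    proof (rule ccontr)
      assume nj: "j \<notin> Jt t"
      have "t \<notin> I j" using nj j by (simp add: Jt_def)
      then have "\<phi> t C = \<phi> t (Bd t)" using tr[OF C(1)] C(2) phi_zero by auto
      then have "C = Bd t" using phibij[of t] C(1) zero_in_V VV
        by (metis bij_betw_iff_bijections)
      then have "\<phi> s C = (\<lambda>_. False)" using phi_zero[of s] VV by simp
      then show False using C(2) by metis
    qed
  next
    fix j assume j: "j \<in> Jt t"
    have "(\<lambda>j'. j' = j) \<in> Fs (Jt t)" using j by (simp add: Fs_def)
    then obtain C where C: "C \<in> V t" "\<phi> t C = (\<lambda>j'. j' = j)"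
      using phibij[of t] by (metis bij_betw_iff_bijections)
    have "\<phi> s C j" using tr[of C] C VV by (metis (mono_tags, lifting))
    moreover have "\<phi> s C \<in> Fs (Jt s)" using phibij[of s] C(1) VV by (metis bij_betwE)
    ultimately show "j \<in> Jt s" by (simp add: Fs_def)
  qed
qed

lemma Jt_const: "lev s = lev t \<Longrightarrow> Jt s = Jt t"
  by (metis Jt_const_le linorder_le_cases)

lemma Jt_empty: "lev t = {} \<Longrightarrow> Jt t = {}"
proof -
  assume l: "lev t = {}"
  have "gens (level h t) k = {}" using l unfolding gens_def lev_def level_def by auto
  then have "Zc t = {{}}" unfolding cycles_def chains_eq by auto
  then have "V t = {coset {} (Bd t)}" by (simp add: homology_eq)
  then have "card (V t) = 1" by simp
  then have "card (Jt t) = 0" using card_V by simp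
  then show ?thesis using finJt by simp
qed

end


context dec begin

lemma transfer_in_V: "s \<le> t \<Longrightarrow> C \<in> V s \<Longrightarrow> transfer n g h d eps k t C \<in> V t"
proof -
  assume st: "s \<le> t" and C: "C \<in> V s"
  obtain z where z: "z \<in> Zc s" "C = coset z (Bd s)" using C by (auto simp: homology_eq)
  have "z \<in> Zc t" using z(1) cyc_mono[OF st] by blast
  then show ?thesis using z transfer_coset[OF st] coset_in_V by simp
qed

lemma kernel_count:
  assumes st: "s \<le> t" and BZ': "Bd t \<subseteq> Zc s"
  shows "2 ^ card (Jt s - Jt t) * card (Bd s) = card (Bd t)"
proof -
  define K where "K = {C\<in>V s. transfer n g h d eps k t C = Bd t}"
  have K1: "K = (\<lambda>z. coset z (Bd s)) ` Bd t"
  proof (rule set_eqI, rule iffI)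
    fix C assume "C \<in> K"
    then have C: "C \<in> V s" "transfer n g h d eps k t C = Bd t" by (auto simp: K_def)
    obtain z where z: "z \<in> Zc s" "C = coset z (Bd s)" using C(1) by (auto simp: homology_eq)
    have "coset z (Bd t) = coset {} (Bd t)" using C(2) z transfer_coset[OF st] coset_zero[OF subspB[of t]] by simp
    then have "z \<in> Bd t" using coset_eq_iff[OF subspB[of t]] by simp
    then show "C \<in> (\<lambda>z. coset z (Bd s)) ` Bd t" using z by blast
  next
    fix C assume "C \<in> (\<lambda>z. coset z (Bd s)) ` Bd t"
    then obtain z where z: "z \<in> Bd t" "C = coset z (Bd s)" by blast
    have "C \<in> V s" using z BZ' coset_in_V by blast
    moreover have "transfer n g h d eps k t C = coset z (Bd t)" using z transfer_coset[OF st] by simp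
    moreover have "coset z (Bd t) = coset {} (Bd t)" using z coset_eq_iff[OF subspB[of t]] by simp
    ultimately show "C \<in> K" unfolding K_def using coset_zero[OF subspB[of t]] by simp
  qed
  have K2: "card K * card (Bd s) = card (Bd t)"
  proof -
    have "card (Bd t) = card ((\<lambda>z. coset z (Bd s)) ` Bd t) * card (Bd s)"
      by (rule coset_count[OF subspB finite_boundaries subspB bd_mono[OF st]])
    then show ?thesis using K1 by simp
  qed
  have Kiff: "C \<in> K \<longleftrightarrow> C \<in> V s \<and> (\<forall>j. \<phi> s C j \<longrightarrow> t \<notin> I j)" for C
  proof
    assume "C \<in> K"
    then have C: "C \<in> V s" "transfer n g h d eps k t C = Bd t" by (auto simp: K_def)
    have "(\<lambda>j. \<phi> s C j \<and> t \<in> I j) = (\<lambda>_. False)" using phitr[OF st C(1)] C(2) phi_zero by simp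
    then have "\<And>j. (\<phi> s C j \<and> t \<in> I j) = False" by (rule fun_cong)
    then show "C \<in> V s \<and> (\<forall>j. \<phi> s C j \<longrightarrow> t \<notin> I j)" using C(1) by blast
  next
    assume C: "C \<in> V s \<and> (\<forall>j. \<phi> s C j \<longrightarrow> t \<notin> I j)"
    then have "\<phi> t (transfer n g h d eps k t C) = \<phi> t (Bd t)" using phitr[OF st] phi_zero[of t] by (auto simp: fun_eq_iff)
    moreover have "transfer n g h d eps k t C \<in> V t" using transfer_in_V[OF st] C by blast
    moreover have "inj_on (\<phi> t) (V t)" using phibij[of t] by (simp add: bij_betw_def)
    ultimately have "transfer n g h d eps k t C = Bd t" using zero_in_V[of t]
      by (meson inj_onD)
    then show "C \<in> K" using C by (simp add: K_def)
  qed
  have injK: "inj_on (\<phi> s) K"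
  proof (rule inj_on_subset)
    show "inj_on (\<phi> s) (V s)" using phibij[of s] by (simp add: bij_betw_def)
    show "K \<subseteq> V s" using Kiff by blast
  qed
  have imK: "\<phi> s ` K = Fs (Jt s - Jt t)"
  proof (rule set_eqI, rule iffI)
    fix f assume "f \<in> \<phi> s ` K"
    then obtain C where C: "C \<in> K" "f = \<phi> s C" by blast
    have "C \<in> V s" using C(1) Kiff by blast
    then have "\<phi> s C \<in> Fs (Jt s)" using bij_betwE[OF phibij[of s]] by blast
    then show "f \<in> Fs (Jt s - Jt t)" using C Kiff by (auto simp: Fs_def Jt_def)
  next
    fix f assume f: "f \<in> Fs (Jt s - Jt t)"
    then have "f \<in> Fs (Jt s)" by (auto simp: Fs_def)
    then have "f \<in> \<phi> s ` V s" using bij_betw_imp_surj_on[OF phibij[of s]] by simp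
    then obtain C where C: "C \<in> V s" "\<phi> s C = f" by blast
    have "\<forall>j. f j \<longrightarrow> t \<notin> I j" using f by (auto simp: Fs_def Jt_def)
    then have "C \<in> K" using C Kiff by simp
    then show "f \<in> \<phi> s ` K" using C by blast
  qed
  have "card K = 2 ^ card (Jt s - Jt t)"
  proof -
    have "card K = card (Fs (Jt s - Jt t))" using card_image[OF injK] imK by simp
    also have "\<dots> = 2 ^ card (Jt s - Jt t)" unfolding Fs_def by (rule card_funs) (simp add: finJt)
    finally show ?thesis .
  qed
  then show ?thesis using K2 by simp
qed

end


context dec begin

definition Dset :: "real \<Rightarrow> nat set" where
  "Dset t = {j\<in>J. (\<exists>p\<le>t. p \<in> I j) \<and> t \<notin> I j}"

lemma finDset: "finite (Dset t)" using finJ by (simp add: Dset_def)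

lemma lev_fin: "finite (lev t)" by (simp add: lev_def)

lemma lev_mono: "p \<le> t \<Longrightarrow> lev p \<subseteq> lev t" by (auto simp: lev_def)

lemma in_Jt: "j \<in> J \<Longrightarrow> p \<in> I j \<Longrightarrow> j \<in> Jt p" by (simp add: Jt_def)

lemma intv_mem: "j \<in> J \<Longrightarrow> a \<in> I j \<Longrightarrow> b \<in> I j \<Longrightarrow> a \<le> x \<Longrightarrow> x \<le> b \<Longrightarrow> x \<in> I j"
  using intv unfolding real_interval_def by blast

lemma Dcount: "2 ^ card (Dset t) = card (Bd t)"
proof (induction "card (lev t)" arbitrary: t rule: less_induct)
  case less
  show ?case
  proof (cases "lev t = {}")
    case True
    have "Dset t = {}"
    proof (rule ccontr)
      assume "Dset t \<noteq> {}"
      then obtain j p where j: "j \<in> J" "p \<le> t" "p \<in> I j" unfolding Dset_def by blast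
      have "lev p = {}" using lev_mono[OF j(2)] True by blast
      then have "Jt p = {}" by (rule Jt_empty)
      then show False using in_Jt[OF j(1,3)] by blast
    qed
    moreover have "Bd t = {{}}"
    proof -
      have "gens (level h t) (k+1) = {}" using True unfolding gens_def lev_def level_def by auto
      then have "chains n g (level h t) (k+1) = {{}}" by (simp add: chains_eq)
      then show ?thesis by (simp add: boundaries_def)
    qed
    ultimately show ?thesis by simp
  next
    case False
    define c where "c = Max (h ` lev t)"
    have fin: "finite (h ` lev t)" using lev_fin by simp
    have "c \<in> h ` lev t" unfolding c_def using fin False by (intro Max_in) auto
    then obtain i0 where i0: "i0 \<in> lev t" "h i0 = c" by blast
    have cge: "\<And>i. i \<in> lev t \<Longrightarrow> h i \<le> c" unfolding c_def using fin by (intro Max_ge) auto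
    have ct: "c \<le> t" using i0 by (auto simp: lev_def)
    have cpos: "c > 0" using i0 hpos by (auto simp: lev_def)
    define L where "L = {i. i < n \<and> h i < c}"
    define s where "s = (if L = {} then 0 else Max (h ` L))"
    have finL: "finite (h ` L)" by (simp add: L_def)
    have sc: "s < c"
    proof (cases "L = {}")
      case True then show ?thesis using cpos by (simp add: s_def)
    next
      case False
      then have "Max (h ` L) \<in> h ` L" using finL by (intro Max_in) auto
      then show ?thesis using False by (auto simp: s_def L_def)
    qed
    have levs: "lev s = L"
    proof (rule set_eqI, rule iffI)
      fix i assume "i \<in> lev s"
      then show "i \<in> L" using sc by (auto simp: lev_def L_def)
    next
      fix i assume iL: "i \<in> L"
      then have "L \<noteq> {}" by blast
      then have "h i \<le> s" unfolding s_def using iL finL by (simp add: Max_ge)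
      then show "i \<in> lev s" using iL by (simp add: lev_def L_def)
    qed
    have st: "s \<le> t" using sc ct by simp
    have lt: "card (lev s) < card (lev t)"
    proof (rule psubset_card_mono[OF lev_fin])
      have "lev s \<subseteq> lev t" using lev_mono[OF st] .
      moreover have "i0 \<notin> lev s" using levs i0 by (simp add: L_def)
      ultimately show "lev s \<subset> lev t" using i0 by blast
    qed
    have mid: "lev p = lev s" if "s < p" "p < c" for p
    proof -
      have "lev s \<subseteq> lev p" using lev_mono that by simp
      moreover have "lev p \<subseteq> L" using that by (auto simp: lev_def L_def)
      ultimately show ?thesis using levs by simp
    qed
    have top: "lev p = lev t" if "c \<le> p" "p \<le> t" for p
    proof -
      have "lev p \<subseteq> lev t" using lev_mono that by simp
      moreover have "lev t \<subseteq> lev p" using cge that by (force simp: lev_def)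
      ultimately show ?thesis by simp
    qed
    have IH: "2 ^ card (Dset s) = card (Bd s)" using less.hyps[OF lt] .
    have BZ': "Bd t \<subseteq> Zc s"
    proof
      fix b assume b: "b \<in> Bd t"
      then have bZ: "b \<in> Zc t" using BZ by blast
      obtain S where S: "S \<in> chains n g (level h t) (k+1)" "b = lin_D d eps S" using b unfolding boundaries_def by auto
      have "j \<in> gens (level h s) k" if jb: "j \<in> b" for j
      proof -
        have jg: "j \<in> gens (level h t) k" using bZ jb by (auto simp: cycles_def chains_eq)
        obtain i where i: "i \<in> S" "j \<in> lin_diff d eps i" using lin_D_mem jb S(2) by blast
        have ig: "i < n" "h i \<le> t" using i(1) S(1) by (auto simp: chains_eq gens_def level_def)
        have "h j < h i" using lin_diff_props[OF ig(1) i(2)] by simp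
        moreover have "h i \<le> c" using cge ig by (simp add: lev_def)
        ultimately have "j \<in> L" using jg by (auto simp: L_def gens_def)
        then have "h j \<le> s" using levs by (auto simp: lev_def)
        then show ?thesis using jg by (auto simp: gens_def level_def)
      qed
      then have "b \<in> chains n g (level h s) k" by (auto simp: chains_eq)
      then show "b \<in> Zc s" using bZ by (simp add: cycles_def)
    qed
    have kc: "2 ^ card (Jt s - Jt t) * card (Bd s) = card (Bd t)" by (rule kernel_count[OF st BZ'])
    have Dsplit: "Dset t = Dset s \<union> (Jt s - Jt t)"
    proof (rule set_eqI, rule iffI)
      fix j assume "j \<in> Dset t"
      then obtain p where j: "j \<in> J" "p \<le> t" "p \<in> I j" "t \<notin> I j" unfolding Dset_def by blast
      show "j \<in> Dset s \<union> (Jt s - Jt t)"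
      proof (cases "s \<in> I j")
        case True
        have "j \<in> Jt s" using j(1) True by (simp add: Jt_def)
        moreover have "j \<notin> Jt t" using j(4) by (simp add: Jt_def)
        ultimately show ?thesis by blast
      next
        case sI: False
        show ?thesis
        proof (cases "p \<le> s")
          case True
          have "j \<in> Dset s" unfolding Dset_def using j(1,3) sI True by blast
          then show ?thesis by blast
        next
          case False
          have jp: "j \<in> Jt p" by (rule in_Jt[OF j(1,3)])
          show ?thesis
          proof (cases "p < c")
            case True
            have "lev p = lev s" using mid[of p] False True by simp
            then have "Jt p = Jt s" by (rule Jt_const)
            then have "s \<in> I j" using jp by (simp add: Jt_def)
            then show ?thesis using sI by simp
          next
            case pc: False
            have "lev p = lev t" using top[of p] pc j(2) by simp
            then have "Jt p = Jt t" by (rule Jt_const)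
            then have "t \<in> I j" using jp by (simp add: Jt_def)
            then show ?thesis using j(4) by simp
          qed
        qed
      qed
    next
      fix j assume "j \<in> Dset s \<union> (Jt s - Jt t)"
      then show "j \<in> Dset t"
      proof
        assume "j \<in> Dset s"
        then obtain p where j: "j \<in> J" "p \<le> s" "p \<in> I j" "s \<notin> I j" unfolding Dset_def by blast
        have "t \<notin> I j" using intv_mem[OF j(1,3), of t s] j st by blast
        moreover have "p \<le> t" using j(2) st by simp
        ultimately show ?thesis using j(1,3) unfolding Dset_def by blast
      next
        assume "j \<in> Jt s - Jt t"
        then show ?thesis using st by (auto simp: Dset_def Jt_def)
      qed
    qed
    have disj: "Dset s \<inter> (Jt s - Jt t) = {}" by (auto simp: Dset_def Jt_def)
    have "card (Dset t) = card (Dset s) + card (Jt s - Jt t)"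
      unfolding Dsplit by (rule card_Un_disjoint[OF finDset _ disj]) (simp add: finJt)
    then have "(2::nat) ^ card (Dset t) = 2 ^ card (Dset s) * 2 ^ card (Jt s - Jt t)" by (simp add: power_add)
    then show ?thesis using IH kc by (metis mult.commute)
  qed
qed

end


lemma hom_dim_eq:
  assumes fA: "finite A" and bij: "bij_betw \<phi> V (Fs A)"
    and add: "\<forall>C1\<in>V. \<forall>C2\<in>V. \<phi> (cadd C1 C2) = (\<lambda>j. \<phi> C1 j \<noteq> \<phi> C2 j)"
  shows "hom_dim V = card A"
proof -
  define m where "m = card A"
  obtain e where e: "bij_betw e {0..<m} A" using ex_bij_betw_nat_finite[OF fA] unfolding m_def by blast
  have eA: "\<And>i. i < m \<Longrightarrow> e i \<in> A" using e by (auto simp: bij_betw_def)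
  have einj: "inj_on e {0..<m}" using e by (simp add: bij_betw_def)
  have eim: "e ` {0..<m} = A" using e by (simp add: bij_betw_def)
  define ie where "ie = inv_into {0..<m} e"
  have ie1: "\<And>i. i < m \<Longrightarrow> ie (e i) = i" unfolding ie_def using einj by (simp add: inv_into_f_f)
  have ie2: "\<And>j. j \<in> A \<Longrightarrow> e (ie j) = j \<and> ie j < m"
  proof -
    fix j assume "j \<in> A"
    then have "j \<in> e ` {0..<m}" using eim by simp
    then show "e (ie j) = j \<and> ie j < m" unfolding ie_def
      by (metis atLeastLessThan_iff f_inv_into_f inv_into_into)
  qed
  define R where "R = (\<lambda>f::nat \<Rightarrow> bool. \<lambda>i. i < m \<and> f (e i))"
  have bR: "bij_betw R (Fs A) {f. \<forall>j. f j \<longrightarrow> j < m}"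
  proof (rule bij_betw_byWitness[where f'="\<lambda>f' j. j \<in> A \<and> f' (ie j)"])
    show "\<forall>f\<in>Fs A. (\<lambda>j. j \<in> A \<and> R f (ie j)) = f"
    proof
      fix f assume f: "f \<in> Fs A"
      show "(\<lambda>j. j \<in> A \<and> R f (ie j)) = f"
      proof
        fix j show "(j \<in> A \<and> R f (ie j)) = f j"
          using f ie2[of j] unfolding R_def Fs_def by auto
      qed
    qed
    show "\<forall>f'\<in>{f. \<forall>j. f j \<longrightarrow> j < m}. R (\<lambda>j. j \<in> A \<and> f' (ie j)) = f'"
    proof
      fix f' :: "nat \<Rightarrow> bool" assume f': "f' \<in> {f. \<forall>j. f j \<longrightarrow> j < m}"
      show "R (\<lambda>j. j \<in> A \<and> f' (ie j)) = f'"
      proof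
        fix i show "R (\<lambda>j. j \<in> A \<and> f' (ie j)) i = f' i"
          using f' eA[of i] ie1[of i] unfolding R_def by auto
      qed
    qed
    show "R ` Fs A \<subseteq> {f. \<forall>j. f j \<longrightarrow> j < m}" unfolding R_def by auto
    show "(\<lambda>f' j. j \<in> A \<and> f' (ie j)) ` {f. \<forall>j. f j \<longrightarrow> j < m} \<subseteq> Fs A" unfolding Fs_def by auto
  qed
  have P: "\<exists>\<psi>. bij_betw \<psi> V {f :: nat \<Rightarrow> bool. \<forall>j. f j \<longrightarrow> j < m} \<and>
                      (\<forall>C1\<in>V. \<forall>C2\<in>V. \<psi> (cadd C1 C2) = (\<lambda>j. \<psi> C1 j \<noteq> \<psi> C2 j))"
  proof (intro exI conjI)
    show "bij_betw (R \<circ> \<phi>) V {f. \<forall>j. f j \<longrightarrow> j < m}" by (rule bij_betw_trans[OF bij bR])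
    show "\<forall>C1\<in>V. \<forall>C2\<in>V. (R \<circ> \<phi>) (cadd C1 C2) = (\<lambda>j. (R \<circ> \<phi>) C1 j \<noteq> (R \<circ> \<phi>) C2 j)"
      using add unfolding R_def by (auto simp: fun_eq_iff)
  qed
  have cV: "card V = 2 ^ m"
    using bij_betw_same_card[OF bij] card_funs[OF fA] unfolding m_def Fs_def by simp
  have U: "m' = m" if ex: "\<exists>\<psi>. bij_betw \<psi> V {f :: nat \<Rightarrow> bool. \<forall>j. f j \<longrightarrow> j < m'} \<and>
                      (\<forall>C1\<in>V. \<forall>C2\<in>V. \<psi> (cadd C1 C2) = (\<lambda>j. \<psi> C1 j \<noteq> \<psi> C2 j))" for m'
  proof -
    obtain \<psi> where \<psi>: "bij_betw \<psi> V {f :: nat \<Rightarrow> bool. \<forall>j. f j \<longrightarrow> j < m'}" using ex by blast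
    have "{f :: nat \<Rightarrow> bool. \<forall>j. f j \<longrightarrow> j < m'} = {f. \<forall>j. f j \<longrightarrow> j \<in> {..<m'}}" by simp
    then have "card V = 2 ^ m'" using bij_betw_same_card[OF \<psi>] card_funs[of "{..<m'}"] by simp
    then have "(2::nat) ^ m' = 2 ^ m" using cV by simp
    then show ?thesis by simp
  qed
  show ?thesis unfolding hom_dim_def m_def[symmetric]
    by (rule the_equality) (use P U in blast)+
qed

context ce begin

definition Tmax :: real where "Tmax = Max (insert 0 (h ` {..<n}))"

lemma Tmax_ge: "i < n \<Longrightarrow> h i \<le> Tmax" unfolding Tmax_def by (intro Max_ge) auto
lemma Tmax_nonneg: "0 \<le> Tmax" unfolding Tmax_def by (intro Max_ge) auto

lemma lev_big: "Tmax \<le> q \<Longrightarrow> lev q = lev Tmax"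
  using Tmax_ge unfolding lev_def by force

lemma full_counts:
  "card (chains n g (\<lambda>_. True) k) = card (boundaries n g d eps (\<lambda>_. True) (k - 1)) * card (cycles n g d eps (\<lambda>_. True) k)"
proof -
  have "card (chains n g (\<lambda>_. True) k) = card (lin_D d eps ` chains n g (\<lambda>_. True) k) * card {x\<in>chains n g (\<lambda>_. True) k. lin_D d eps x = {}}"
    by (rule linear_count[OF subsp_chains finite_chains]) (simp add: lin_D_xor chains_fin)
  moreover have "boundaries n g d eps (\<lambda>_. True) (k - 1) = lin_D d eps ` chains n g (\<lambda>_. True) k"
    by (simp add: boundaries_def)
  ultimately show ?thesis by (simp add: cycles_def)
qed

lemma card_chains_full: "card (chains n g (\<lambda>_. True) k) = 2 ^ MC_coeff n g k"
  by (simp add: chains_eq gens_def MC_coeff_def card_Pow)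

lemma card_cycles_full:
  "card (cycles n g d eps (\<lambda>_. True) k) = card (homology n g d eps (\<lambda>_. True) k) * card (boundaries n g d eps (\<lambda>_. True) k)"
  using coset_count[OF subsp_cycles finite_cycles subsp_boundaries bd_sub_cyc[OF downcl_True]]
  by (simp add: homology_eq)

end

context dec begin

lemma chains_T: "chains n g (level h Tmax) k' = chains n g (\<lambda>_. True) k'"
  by (rule level_eq_all) (simp add: Tmax_ge)

lemma V_T: "V Tmax = homology n g d eps (\<lambda>_. True) k"
  unfolding homology_def boundaries_def cycles_def chains_T ..

lemma Bd_T: "Bd Tmax = boundaries n g d eps (\<lambda>_. True) k"
  unfolding boundaries_def chains_T ..

lemma bars_eq: "finite_bars J I = card (Dset Tmax)"
proof -
  have "{j\<in>J. \<exists>a b. I j \<subseteq> {a..b}} = Dset Tmax"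
  proof (rule set_eqI, rule iffI)
    fix j assume "j \<in> {j\<in>J. \<exists>a b. I j \<subseteq> {a..b}}"
    then obtain a b where j: "j \<in> J" "I j \<subseteq> {a..b}" by blast
    obtain p0 where p0: "p0 \<in> I j" using intv[OF j(1)] unfolding real_interval_def by blast
    have nT: "Tmax \<notin> I j"
    proof
      assume TI: "Tmax \<in> I j"
      define q where "q = max Tmax (b + 1)"
      have "lev q = lev Tmax" by (rule lev_big) (simp add: q_def)
      then have "Jt q = Jt Tmax" by (rule Jt_const)
      then have "q \<in> I j" using TI j(1) by (auto simp: Jt_def)
      then have "q \<le> b" using j(2) by auto
      then show False by (simp add: q_def)
    qed
    have "p0 \<le> Tmax"
    proof (rule ccontr)
      assume "\<not> p0 \<le> Tmax"
      then have "lev p0 = lev Tmax" by (intro lev_big) simp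
      then have "Jt p0 = Jt Tmax" by (rule Jt_const)
      then show False using p0 j(1) nT by (auto simp: Jt_def)
    qed
    then show "j \<in> Dset Tmax" using j(1) p0 nT unfolding Dset_def by blast
  next
    fix j assume "j \<in> Dset Tmax"
    then obtain p where j: "j \<in> J" "p \<le> Tmax" "p \<in> I j" "Tmax \<notin> I j" unfolding Dset_def by blast
    have "I j \<subseteq> {0..Tmax}"
    proof
      fix q assume q: "q \<in> I j"
      have "q \<le> Tmax"
      proof (rule ccontr)
        assume "\<not> q \<le> Tmax"
        then have "lev q = lev Tmax" by (intro lev_big) simp
        then have "Jt q = Jt Tmax" by (rule Jt_const)
        then show False using q j by (auto simp: Jt_def)
      qed
      moreover have "0 \<le> q"
      proof (rule ccontr)
        assume "\<not> 0 \<le> q"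
        then have "lev q = {}" using hpos by (force simp: lev_def)
        then have "Jt q = {}" by (rule Jt_empty)
        then show False using q j(1) by (auto simp: Jt_def)
      qed
      ultimately show "q \<in> {0..Tmax}" by simp
    qed
    then show "j \<in> {j\<in>J. \<exists>a b. I j \<subseteq> {a..b}}" using j(1) by blast
  qed
  then show ?thesis by (simp add: finite_bars_def)
qed

lemma card_Bd_full: "card (boundaries n g d eps (\<lambda>_. True) k) = 2 ^ finite_bars J I"
  using Dcount[of Tmax] by (simp add: bars_eq Bd_T)

lemma PC_eq: "PC_coeff n g d eps k = card (Jt Tmax)"
  unfolding PC_coeff_def V_T[symmetric]
  by (rule hom_dim_eq[OF finJt phibij]) (use phiadd in blast)

lemma card_V_full: "card (homology n g d eps (\<lambda>_. True) k) = 2 ^ PC_coeff n g d eps k"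
  using card_V[of Tmax] by (simp add: V_T PC_eq)

end


context ce begin

definition key :: "nat \<Rightarrow> real \<times> nat" where "key i = (h i, i)"
definition low :: "nat set \<Rightarrow> nat" where "low z = snd (Max (key ` z))"

lemma key_inj: "key i = key j \<Longrightarrow> i = j" by (simp add: key_def)

lemma key_le_h: "key i \<le> key j \<Longrightarrow> h i \<le> h j"
  by (auto simp: key_def less_eq_prod_def)

lemma low_props:
  assumes "finite z" "z \<noteq> {}"
  shows "low z \<in> z \<and> (\<forall>j\<in>z. key j \<le> key (low z))"
proof -
  have "Max (key ` z) \<in> key ` z" using assms by (intro Max_in) auto
  then obtain i0 where i0: "i0 \<in> z" "Max (key ` z) = key i0" by auto
  have "low z = i0" unfolding low_def i0(2) by (simp add: key_def)
  moreover have "\<forall>j\<in>z. key j \<le> Max (key ` z)" using assms by (intro ballI Max_ge) auto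
  ultimately show ?thesis using i0 by simp
qed

lemma low_in: "finite z \<Longrightarrow> z \<noteq> {} \<Longrightarrow> low z \<in> z" using low_props by blast
lemma low_max: "finite z \<Longrightarrow> j \<in> z \<Longrightarrow> key j \<le> key (low z)" using low_props by blast

lemma xsum_nz:
  assumes S: "finite S" "S \<noteq> {}" and e: "\<forall>\<tau>\<in>S. finite (e \<tau>) \<and> e \<tau> \<noteq> {} \<and> low (e \<tau>) = \<tau>"
  shows "psum e S \<noteq> {}"
proof -
  define t0 where "t0 = low S"
  have t0: "t0 \<in> S" unfolding t0_def by (rule low_in[OF S])
  have "{\<tau>\<in>S. t0 \<in> e \<tau>} = {t0}"
  proof (rule set_eqI, rule iffI)
    fix \<tau> assume "\<tau> \<in> {\<tau>\<in>S. t0 \<in> e \<tau>}"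
    then have \<tau>: "\<tau> \<in> S" "t0 \<in> e \<tau>" by auto
    have "key t0 \<le> key (low (e \<tau>))" using low_max[OF _ \<tau>(2)] e \<tau>(1) by blast
    then have "key t0 \<le> key \<tau>" using e \<tau>(1) by simp
    moreover have "key \<tau> \<le> key t0" unfolding t0_def by (rule low_max[OF S(1) \<tau>(1)])
    ultimately have "key \<tau> = key t0" by (rule antisym[rotated])
    then show "\<tau> \<in> {t0}" using key_inj by simp
  next
    fix \<tau> assume "\<tau> \<in> {t0}"
    then have "\<tau> = t0" by simp
    moreover have "finite (e t0)" "e t0 \<noteq> {}" "low (e t0) = t0" using e t0 by auto
    then have "t0 \<in> e t0" using low_in by metis
    ultimately show "\<tau> \<in> {\<tau>\<in>S. t0 \<in> e \<tau>}" using t0 by simp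
  qed
  then have "t0 \<in> psum e S" by (simp add: psum_def)
  then show ?thesis by blast
qed

lemma xsum_inj:
  assumes "finite S1" "finite S2" "\<forall>\<tau>\<in>S1 \<union> S2. finite (e \<tau>) \<and> e \<tau> \<noteq> {} \<and> low (e \<tau>) = \<tau>"
    and "psum e S1 = psum e S2"
  shows "S1 = S2"
proof (rule ccontr)
  assume ne: "S1 \<noteq> S2"
  have z: "psum e (S1 \<oplus> S2) = {}" unfolding psum_xor[OF assms(1,2), of e] assms(4) by simp
  have ne2: "S1 \<oplus> S2 \<noteq> {}" using ne xor_eq_empty[of S1 S2] by simp
  have P: "\<forall>\<tau>\<in>S1 \<oplus> S2. finite (e \<tau>) \<and> e \<tau> \<noteq> {} \<and> low (e \<tau>) = \<tau>"
  proof
    fix \<tau> assume "\<tau> \<in> S1 \<oplus> S2"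
    then have "\<tau> \<in> S1 \<union> S2" using xor_sub by (rule subsetD[rotated])
    then show "finite (e \<tau>) \<and> e \<tau> \<noteq> {} \<and> low (e \<tau>) = \<tau>" by (rule bspec[OF assms(3)])
  qed
  have fin: "finite (S1 \<oplus> S2)" using assms(1,2) by simp
  show False using xsum_nz[OF fin ne2 P] z by simp
qed

lemma xsum_closed:
  assumes W: "subsp W" and S: "finite S" "\<forall>\<tau>\<in>S. e \<tau> \<in> W"
  shows "psum e S \<in> W"
  using S
proof (induction S rule: finite_induct)
  case empty then show ?case using W by (simp add: subsp_def)
next
  case (insert x F)
  then have "psum e (insert x F) = e x \<oplus> psum e F" by (simp add: psum_insert)
  then show ?case using insert W unfolding subsp_def by simp
qed

lemma span_ech:
  assumes G: "finite G" and W: "subsp W" and WG: "\<forall>z\<in>W. z \<subseteq> G"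
    and E: "\<forall>z\<in>W. z \<noteq> {} \<longrightarrow> low z \<in> P"
    and Ee: "\<forall>\<tau>\<in>P. e \<tau> \<in> W \<and> e \<tau> \<noteq> {} \<and> low (e \<tau>) = \<tau>"
  shows "z \<in> W \<Longrightarrow> \<exists>S. S \<subseteq> P \<and> finite S \<and> psum e S = z \<and> (\<forall>\<tau>\<in>S. \<exists>j\<in>z. key \<tau> \<le> key j)"
proof (induction "card {j\<in>G. \<exists>i\<in>z. key j \<le> key i}" arbitrary: z rule: less_induct)
  case less
  show ?case
  proof (cases "z = {}")
    case True then show ?thesis by (intro exI[of _ "{}"]) simp
  next
    case False
    have zG: "z \<subseteq> G" using bspec[OF WG less.prems] .
    have fz: "finite z" by (rule finite_subset[OF zG G])
    define \<tau> where "\<tau> = low z"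
    have \<tau>P: "\<tau> \<in> P" using E less.prems False by (simp add: \<tau>_def)
    have e\<tau>: "e \<tau> \<in> W" "e \<tau> \<noteq> {}" "low (e \<tau>) = \<tau>" using bspec[OF Ee \<tau>P] by auto
    have feG: "e \<tau> \<subseteq> G" using bspec[OF WG e\<tau>(1)] .
    have fe: "finite (e \<tau>)" by (rule finite_subset[OF feG G])
    have \<tau>z: "\<tau> \<in> z" unfolding \<tau>_def by (rule low_in[OF fz False])
    have \<tau>e: "\<tau> \<in> e \<tau>" using low_in[OF fe e\<tau>(2)] e\<tau>(3) by simp
    define z' where "z' = z \<oplus> e \<tau>"
    have cl: "\<forall>x\<in>W. \<forall>y\<in>W. x \<oplus> y \<in> W" using W unfolding subsp_def by (rule conjunct2)
    have z'W: "z' \<in> W" unfolding z'_def using bspec[OF bspec[OF cl less.prems] e\<tau>(1)] .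
    have z'lt: "key j < key \<tau>" if j: "j \<in> z'" for j
    proof -
      have "j \<in> z \<or> j \<in> e \<tau>" using j unfolding z'_def by (simp add: xor_mem)
      then have kle: "key j \<le> key \<tau>"
      proof
        assume "j \<in> z" then show ?thesis unfolding \<tau>_def by (rule low_max[OF fz])
      next
        assume "j \<in> e \<tau>" then have "key j \<le> key (low (e \<tau>))" by (rule low_max[OF fe])
        then show ?thesis using e\<tau>(3) by simp
      qed
      have "\<tau> \<notin> z'" unfolding z'_def using \<tau>z \<tau>e by (simp add: xor_mem)
      then have "j \<noteq> \<tau>" using j by metis
      have kne: "key j \<noteq> key \<tau>"
      proof
        assume "key j = key \<tau>" then have "j = \<tau>" by (rule key_inj)
        then show False using \<open>j \<noteq> \<tau>\<close> by simp
      qed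
      show ?thesis using kle kne by (simp add: order_less_le)
    qed
    have sub: "{j\<in>G. \<exists>i\<in>z'. key j \<le> key i} \<subset> {j\<in>G. \<exists>i\<in>z. key j \<le> key i}"
    proof
      show "{j\<in>G. \<exists>i\<in>z'. key j \<le> key i} \<subseteq> {j\<in>G. \<exists>i\<in>z. key j \<le> key i}"
      proof
        fix j assume "j \<in> {j\<in>G. \<exists>i\<in>z'. key j \<le> key i}"
        then obtain i where "j \<in> G" "i \<in> z'" "key j \<le> key i" by blast
        then have "j \<in> G" "key j \<le> key \<tau>" using z'lt[of i] by auto
        then show "j \<in> {j\<in>G. \<exists>i\<in>z. key j \<le> key i}" using \<tau>z by blast
      qed
      have "\<tau> \<in> {j\<in>G. \<exists>i\<in>z. key j \<le> key i}" using \<tau>z zG by blast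
      moreover have "\<tau> \<notin> {j\<in>G. \<exists>i\<in>z'. key j \<le> key i}"
      proof
        assume "\<tau> \<in> {j\<in>G. \<exists>i\<in>z'. key j \<le> key i}"
        then obtain i where "i \<in> z'" "key \<tau> \<le> key i" by blast
        then show False using z'lt[of i] by simp
      qed
      ultimately show "{j\<in>G. \<exists>i\<in>z'. key j \<le> key i} \<noteq> {j\<in>G. \<exists>i\<in>z. key j \<le> key i}" by blast
    qed
    have lt: "card {j\<in>G. \<exists>i\<in>z'. key j \<le> key i} < card {j\<in>G. \<exists>i\<in>z. key j \<le> key i}"
      by (rule psubset_card_mono[OF _ sub]) (simp add: G)
    obtain S' where S': "S' \<subseteq> P" "finite S'" "psum e S' = z'" "\<forall>\<tau>'\<in>S'. \<exists>j\<in>z'. key \<tau>' \<le> key j"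
      using less.hyps[OF lt z'W] by blast
    have nS': "\<tau> \<notin> S'"
    proof
      assume "\<tau> \<in> S'"
      then obtain j where "j \<in> z'" "key \<tau> \<le> key j" using S'(4) by blast
      then show False using z'lt[of j] by simp
    qed
    have "psum e (insert \<tau> S') = e \<tau> \<oplus> z'" using psum_insert[OF S'(2) nS', of e] S'(3) by simp
    also have "\<dots> = z" unfolding z'_def by (auto simp: xor_set_def)
    finally have ps: "psum e (insert \<tau> S') = z" .
    have bnd: "\<forall>\<tau>'\<in>insert \<tau> S'. \<exists>j\<in>z. key \<tau>' \<le> key j"
    proof
      fix \<tau>' assume "\<tau>' \<in> insert \<tau> S'"
      then show "\<exists>j\<in>z. key \<tau>' \<le> key j"
      proof
        assume "\<tau>' = \<tau>" then show ?thesis using \<tau>z by blast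
      next
        assume "\<tau>' \<in> S'"
        then obtain j where "j \<in> z'" "key \<tau>' \<le> key j" using S'(4) by blast
        then have "key \<tau>' \<le> key \<tau>" using z'lt[of j] by simp
        then show ?thesis using \<tau>z by blast
      qed
    qed
    show ?thesis using S' \<tau>P ps bnd by (intro exI[of _ "insert \<tau> S'"]) simp
  qed
qed

end


locale exk = ce +
  fixes k :: int
begin

abbreviation "Gk \<equiv> gens (\<lambda>_. True) k"
abbreviation "Zf \<equiv> cycles n g d eps (\<lambda>_. True) k"
abbreviation "Bf \<equiv> boundaries n g d eps (\<lambda>_. True) k"
abbreviation "Bt t \<equiv> boundaries n g d eps (level h t) k"
abbreviation "Zt t \<equiv> cycles n g d eps (level h t) k"

definition "PZ = {low z | z. z \<in> Zf \<and> z \<noteq> {}}"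
definition "PB = {low b | b. b \<in> Bf \<and> b \<noteq> {}}"
definition "Hs = h ` gens (\<lambda>_. True) (k+1)"
definition "dth \<tau> = Min {s\<in>Hs. \<exists>b\<in>Bt s. b \<noteq> {} \<and> low b = \<tau>}"
definition "bb \<tau> = (SOME b. b \<in> Bt (dth \<tau>) \<and> b \<noteq> {} \<and> low b = \<tau>)"
definition "ee \<tau> = (if \<tau> \<in> PB then bb \<tau> else SOME z. z \<in> Zf \<and> z \<noteq> {} \<and> low z = \<tau>)"
definition "coords z = (THE S. S \<subseteq> PZ \<and> psum ee S = z)"
definition "Ib \<tau> = {x. h \<tau> \<le> x \<and> (\<tau> \<in> PB \<longrightarrow> x < dth \<tau>)}"
definition "ph t C = (\<lambda>\<tau>. \<tau> \<in> PZ \<and> t \<in> Ib \<tau> \<and> \<tau> \<in> coords (SOME z. z \<in> C))"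

lemma Zf_sub: "z \<in> Zf \<Longrightarrow> z \<subseteq> Gk" by (simp add: cycles_def chains_eq)
lemma Zf_fin: "z \<in> Zf \<Longrightarrow> finite z" using Zf_sub finite_subset gens_fin by metis
lemma Zt_Zf: "Zt t \<subseteq> Zf" unfolding cycles_def chains_def by auto
lemma Bt_Bf: "Bt t \<subseteq> Bf" unfolding boundaries_def chains_def by auto
lemma Bf_Zf: "Bf \<subseteq> Zf" by (rule bd_sub_cyc[OF downcl_True])
lemma Bt_Zt: "Bt t \<subseteq> Zt t" by (rule bd_sub_cyc[OF downcl_level])
lemma Bt_sub: "b \<in> Bt t \<Longrightarrow> b \<subseteq> Gk" using Bt_Bf Bf_Zf Zf_sub by blast

lemma PZ_sub: "PZ \<subseteq> Gk"
proof
  fix \<tau> assume "\<tau> \<in> PZ"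
  then obtain z where z: "z \<in> Zf" "z \<noteq> {}" "\<tau> = low z" unfolding PZ_def by blast
  have "low z \<in> z" by (rule low_in[OF Zf_fin[OF z(1)] z(2)])
  then show "\<tau> \<in> Gk" using z Zf_sub by blast
qed

lemma finPZ: "finite PZ" using PZ_sub finite_subset gens_fin by metis

lemma PB_PZ: "PB \<subseteq> PZ" unfolding PB_def PZ_def using Bf_Zf by blast

lemma finHs: "finite Hs" by (simp add: Hs_def)

lemma B0:
  assumes b: "b \<in> Bt t" "b \<noteq> {}"
  shows "\<exists>s\<in>Hs. s \<le> t \<and> b \<in> Bt s"
proof -
  obtain S where S: "S \<in> chains n g (level h t) (k+1)" "b = lin_D d eps S"
    using b(1) unfolding boundaries_def by auto
  have Sne: "S \<noteq> {}" using S b(2) by auto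
  have SG: "S \<subseteq> gens (level h t) (k+1)" using S(1) by (simp add: chains_eq)
  have fS: "finite S" using SG finite_subset gens_fin by metis
  define s where "s = Max (h ` S)"
  have "s \<in> h ` S" unfolding s_def using fS Sne by (intro Max_in) auto
  then obtain i0 where i0: "i0 \<in> S" "s = h i0" by blast
  have sHs: "s \<in> Hs" using i0 SG unfolding Hs_def gens_def by auto
  have st: "s \<le> t" using i0 SG unfolding gens_def level_def by auto
  have "S \<subseteq> gens (level h s) (k+1)"
  proof
    fix i assume i: "i \<in> S"
    have "h i \<le> s" unfolding s_def using fS i by (intro Max_ge) auto
    then show "i \<in> gens (level h s) (k+1)" using i SG unfolding gens_def level_def by auto
  qed
  then have "b \<in> Bt s" using S(2) unfolding boundaries_def by (auto simp: chains_eq)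
  then show ?thesis using sHs st by blast
qed

lemma Bf_eq: "Bf = Bt Tmax"
  unfolding boundaries_def using level_eq_all[of Tmax "k+1"] Tmax_ge by simp

lemma dth_props:
  assumes "\<tau> \<in> PB"
  shows "dth \<tau> \<in> Hs \<and> (\<exists>b\<in>Bt (dth \<tau>). b \<noteq> {} \<and> low b = \<tau>)"
proof -
  obtain b where b: "b \<in> Bf" "b \<noteq> {}" "\<tau> = low b" using assms unfolding PB_def by blast
  obtain s where s: "s \<in> Hs" "b \<in> Bt s" using B0[of b Tmax] b Bf_eq by auto
  have ne: "{s\<in>Hs. \<exists>b\<in>Bt s. b \<noteq> {} \<and> low b = \<tau>} \<noteq> {}" using s b by blast
  have "dth \<tau> \<in> {s\<in>Hs. \<exists>b\<in>Bt s. b \<noteq> {} \<and> low b = \<tau>}"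
    unfolding dth_def by (rule Min_in) (use finHs ne in auto)
  then show ?thesis by blast
qed

lemma bb_props: "\<tau> \<in> PB \<Longrightarrow> bb \<tau> \<in> Bt (dth \<tau>) \<and> bb \<tau> \<noteq> {} \<and> low (bb \<tau>) = \<tau>"
  unfolding bb_def using dth_props[of \<tau>] by (metis (mono_tags, lifting) someI_ex)

lemma dth_le:
  assumes b: "b \<in> Bt t" "b \<noteq> {}"
  shows "low b \<in> PB \<and> dth (low b) \<le> t"
proof -
  have "low b \<in> PB" using b Bt_Bf unfolding PB_def by blast
  moreover obtain s where s: "s \<in> Hs" "s \<le> t" "b \<in> Bt s" using B0[OF b] by blast
  have "dth (low b) \<le> s" unfolding dth_def by (rule Min_le) (use finHs s b in auto)
  ultimately show ?thesis using s by simp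
qed

lemma h_lt_dth:
  assumes "\<tau> \<in> PB" shows "h \<tau> < dth \<tau>"
proof -
  have bb: "bb \<tau> \<in> Bt (dth \<tau>)" "bb \<tau> \<noteq> {}" "low (bb \<tau>) = \<tau>" using bb_props[OF assms] by auto
  obtain S where S: "S \<in> chains n g (level h (dth \<tau>)) (k+1)" "bb \<tau> = lin_D d eps S"
    using bb(1) unfolding boundaries_def by auto
  have fb: "finite (bb \<tau>)" using Bt_sub[OF bb(1)] finite_subset gens_fin by metis
  have "\<tau> \<in> bb \<tau>" using low_in[OF fb bb(2)] bb(3) by simp
  then obtain i where i: "i \<in> S" "\<tau> \<in> lin_diff d eps i" using lin_D_mem S(2) by metis
  have ig: "i < n" "h i \<le> dth \<tau>" using i(1) S(1) by (auto simp: chains_eq gens_def level_def)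
  have "h \<tau> < h i" using lin_diff_props[OF ig(1) i(2)] by simp
  then show ?thesis using ig by simp
qed

lemma ee_props:
  assumes "\<tau> \<in> PZ" shows "ee \<tau> \<in> Zf \<and> ee \<tau> \<noteq> {} \<and> low (ee \<tau>) = \<tau>"
proof (cases "\<tau> \<in> PB")
  case True
  then have "ee \<tau> = bb \<tau>" by (simp add: ee_def)
  moreover have "bb \<tau> \<in> Zf" using bb_props[OF True] Bt_Bf Bf_Zf by blast
  ultimately show ?thesis using bb_props[OF True] by simp
next
  case False
  have ex: "\<exists>z. z \<in> Zf \<and> z \<noteq> {} \<and> low z = \<tau>" using assms unfolding PZ_def by blast
  have "ee \<tau> = (SOME z. z \<in> Zf \<and> z \<noteq> {} \<and> low z = \<tau>)" using False by (simp add: ee_def)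
  then show ?thesis using someI_ex[OF ex] by simp
qed

lemma ee_PB: "\<tau> \<in> PB \<Longrightarrow> ee \<tau> = bb \<tau>" by (simp add: ee_def)

lemma ee_fin: "\<tau> \<in> PZ \<Longrightarrow> finite (ee \<tau>)" using ee_props Zf_fin by blast

lemma ee_cond: "S \<subseteq> PZ \<Longrightarrow> \<forall>\<tau>\<in>S. finite (ee \<tau>) \<and> ee \<tau> \<noteq> {} \<and> low (ee \<tau>) = \<tau>"
  using ee_props ee_fin by blast

lemma uniq: "S1 \<subseteq> PZ \<Longrightarrow> S2 \<subseteq> PZ \<Longrightarrow> psum ee S1 = psum ee S2 \<Longrightarrow> S1 = S2"
proof -
  assume a: "S1 \<subseteq> PZ" "S2 \<subseteq> PZ" "psum ee S1 = psum ee S2"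
  have "S1 \<union> S2 \<subseteq> PZ" using a by simp
  then show ?thesis by (rule xsum_inj[OF finite_subset[OF a(1) finPZ] finite_subset[OF a(2) finPZ] ee_cond a(3)])
qed

lemma span_Z:
  assumes "z \<in> Zf"
  shows "\<exists>S. S \<subseteq> PZ \<and> finite S \<and> psum ee S = z \<and> (\<forall>\<tau>\<in>S. \<exists>j\<in>z. key \<tau> \<le> key j)"
proof (rule span_ech[OF gens_fin subsp_cycles _ _ _ assms])
  show "\<forall>z\<in>Zf. z \<subseteq> Gk" using Zf_sub by blast
  show "\<forall>z\<in>Zf. z \<noteq> {} \<longrightarrow> low z \<in> PZ" unfolding PZ_def by blast
  show "\<forall>\<tau>\<in>PZ. ee \<tau> \<in> Zf \<and> ee \<tau> \<noteq> {} \<and> low (ee \<tau>) = \<tau>" using ee_props by (intro ballI)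
qed

lemma coords_xsum: "S \<subseteq> PZ \<Longrightarrow> coords (psum ee S) = S"
proof -
  assume S: "S \<subseteq> PZ"
  show ?thesis unfolding coords_def
  proof (rule the_equality)
    show "S \<subseteq> PZ \<and> psum ee S = psum ee S" using S by simp
    fix S' assume "S' \<subseteq> PZ \<and> psum ee S' = psum ee S"
    then show "S' = S" using uniq[of S' S] S by simp
  qed
qed

lemma coords_spec: "z \<in> Zf \<Longrightarrow> coords z \<subseteq> PZ \<and> psum ee (coords z) = z"
proof -
  assume z: "z \<in> Zf"
  obtain S where S: "S \<subseteq> PZ" "psum ee S = z" using span_Z[OF z] by blast
  have "coords z = S" using coords_xsum[OF S(1)] S(2) by simp
  then show ?thesis using S by simp
qed

lemma coords_lin:
  assumes "x \<in> Zf" "y \<in> Zf"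
  shows "coords (x \<oplus> y) = coords x \<oplus> coords y"
proof -
  have cx: "coords x \<subseteq> PZ" "psum ee (coords x) = x" using coords_spec[OF assms(1)] by auto
  have cy: "coords y \<subseteq> PZ" "psum ee (coords y) = y" using coords_spec[OF assms(2)] by auto
  have f: "finite (coords x)" "finite (coords y)" using finite_subset[OF cx(1) finPZ] finite_subset[OF cy(1) finPZ] by auto
  have "psum ee (coords x \<oplus> coords y) = x \<oplus> y" using psum_xor[OF f, of ee] cx cy by simp
  moreover have "coords x \<union> coords y \<subseteq> PZ" using cx(1) cy(1) by simp
  then have "coords x \<oplus> coords y \<subseteq> PZ" by (rule subset_trans[OF xor_sub])
  ultimately show ?thesis using coords_xsum[of "coords x \<oplus> coords y"] by metis
qed

lemma coords_Zt:
  assumes z: "z \<in> Zt t" shows "\<tau> \<in> coords z \<Longrightarrow> h \<tau> \<le> t"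
proof -
  assume \<tau>: "\<tau> \<in> coords z"
  have zf: "z \<in> Zf" using z Zt_Zf by blast
  obtain S where S: "S \<subseteq> PZ" "psum ee S = z" "\<forall>\<tau>\<in>S. \<exists>j\<in>z. key \<tau> \<le> key j" using span_Z[OF zf] by blast
  have "coords z = S" using coords_xsum[OF S(1)] S(2) by simp
  then obtain j where j: "j \<in> z" "key \<tau> \<le> key j" using S(3) \<tau> by blast
  have "h j \<le> t" using j(1) z by (auto simp: cycles_def chains_eq gens_def level_def)
  then show ?thesis using key_le_h[OF j(2)] by simp
qed

lemma xsum_Zt:
  assumes S: "S \<subseteq> PZ" "\<forall>\<tau>\<in>S. h \<tau> \<le> t"
  shows "psum ee S \<in> Zt t"
proof -
  have fS: "finite S" by (rule finite_subset[OF S(1) finPZ])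
  have "\<forall>\<tau>\<in>S. ee \<tau> \<in> Zf"
  proof
    fix \<tau> assume "\<tau> \<in> S"
    then have "\<tau> \<in> PZ" using S(1) by blast
    then show "ee \<tau> \<in> Zf" using ee_props[of \<tau>] by simp
  qed
  then have zf: "psum ee S \<in> Zf" by (rule xsum_closed[OF subsp_cycles fS])
  have gj: "j \<in> gens (level h t) k" if j: "j \<in> psum ee S" for j
  proof -
    have "j \<in> (\<Union>i\<in>S. ee i)" using psum_sub[of ee S] j by (rule subsetD)
    then obtain \<tau> where \<tau>: "\<tau> \<in> S" "j \<in> ee \<tau>" by (rule UN_E)
    have \<tau>P: "\<tau> \<in> PZ" using S(1) \<tau>(1) by blast
    have "key j \<le> key (low (ee \<tau>))" by (rule low_max[OF ee_fin[OF \<tau>P] \<tau>(2)])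
    then have "key j \<le> key \<tau>" using ee_props[OF \<tau>P] by simp
    then have "h j \<le> h \<tau>" by (rule key_le_h)
    then have "h j \<le> t" using S(2) \<tau>(1) by force
    moreover have "j \<in> Gk" using Zf_sub[OF zf] j by blast
    ultimately show ?thesis by (simp add: gens_def level_def)
  qed
  then have "psum ee S \<subseteq> gens (level h t) k" by (rule subsetI)
  moreover have "lin_D d eps (psum ee S) = {}" using zf by (simp add: cycles_def)
  ultimately show ?thesis by (simp add: cycles_def chains_eq)
qed

lemma coords_Bt:
  assumes b: "b \<in> Bt t" shows "\<tau> \<in> coords b \<Longrightarrow> \<tau> \<in> PB \<and> dth \<tau> \<le> t"
proof -
  assume \<tau>: "\<tau> \<in> coords b"
  have "\<exists>S. S \<subseteq> {\<tau>\<in>PB. dth \<tau> \<le> t} \<and> finite S \<and> psum ee S = b \<and> (\<forall>\<tau>\<in>S. \<exists>j\<in>b. key \<tau> \<le> key j)"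
  proof (rule span_ech[OF gens_fin subsp_boundaries _ _ _ b])
    show "\<forall>z\<in>Bt t. z \<subseteq> Gk" using Bt_sub by (intro ballI)
    show "\<forall>z\<in>Bt t. z \<noteq> {} \<longrightarrow> low z \<in> {\<tau> \<in> PB. dth \<tau> \<le> t}"
    proof (intro ballI impI)
      fix z assume "z \<in> Bt t" "z \<noteq> {}"
      then show "low z \<in> {\<tau> \<in> PB. dth \<tau> \<le> t}" using dth_le[of z t] by simp
    qed
    show "\<forall>\<tau>\<in>{\<tau> \<in> PB. dth \<tau> \<le> t}. ee \<tau> \<in> Bt t \<and> ee \<tau> \<noteq> {} \<and> low (ee \<tau>) = \<tau>"
    proof
      fix \<tau> assume "\<tau> \<in> {\<tau> \<in> PB. dth \<tau> \<le> t}"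
      then have \<tau>: "\<tau> \<in> PB" "dth \<tau> \<le> t" by auto
      have bp: "bb \<tau> \<in> Bt (dth \<tau>)" "bb \<tau> \<noteq> {}" "low (bb \<tau>) = \<tau>" using bb_props[OF \<tau>(1)] by auto
      have "bb \<tau> \<in> Bt t" by (rule subsetD[OF bd_mono[OF \<tau>(2)] bp(1)])
      then show "ee \<tau> \<in> Bt t \<and> ee \<tau> \<noteq> {} \<and> low (ee \<tau>) = \<tau>" using bp ee_PB[OF \<tau>(1)] by simp
    qed
  qed
  then obtain S where S: "S \<subseteq> {\<tau>\<in>PB. dth \<tau> \<le> t}" "psum ee S = b" by blast
  have SP: "S \<subseteq> PZ" using S(1) PB_PZ by blast
  have "coords b = S" using coords_xsum[OF SP] S(2) by simp
  then show ?thesis using S(1) \<tau> by blast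
qed

lemma xsum_Bt:
  assumes S: "S \<subseteq> PB" "\<forall>\<tau>\<in>S. dth \<tau> \<le> t"
  shows "psum ee S \<in> Bt t"
proof -
  have "S \<subseteq> PZ" using S(1) PB_PZ by (rule subset_trans)
  then have fS: "finite S" by (rule finite_subset[OF _ finPZ])
  have "\<forall>\<tau>\<in>S. ee \<tau> \<in> Bt t"
  proof
    fix \<tau> assume \<tau>: "\<tau> \<in> S"
    then have \<tau>': "\<tau> \<in> PB" "dth \<tau> \<le> t" using S by auto
    have "bb \<tau> \<in> Bt (dth \<tau>)" using bb_props[OF \<tau>'(1)] by simp
    then have "bb \<tau> \<in> Bt t" by (rule subsetD[OF bd_mono[OF \<tau>'(2)]])
    then show "ee \<tau> \<in> Bt t" using ee_PB[OF \<tau>'(1)] by simp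
  qed
  then show ?thesis by (rule xsum_closed[OF subsp_boundaries fS])
qed

end


context exk begin

lemma transfer_coset_e:
  assumes "s \<le> t"
  shows "transfer n g h d eps k t (coset z (Bt s)) = coset z (Bt t)"
proof (rule set_eqI, rule iffI)
  fix u assume "u \<in> transfer n g h d eps k t (coset z (Bt s))"
  then obtain b1 b where b: "b1 \<in> Bt s" "b \<in> Bt t" "u = (z \<oplus> b1) \<oplus> b"
    unfolding transfer_def coset_def by blast
  have "b1 \<in> Bt t" using b(1) bd_mono[OF assms] by blast
  then have "b1 \<oplus> b \<in> Bt t" using b(2) subsp_boundaries unfolding subsp_def by blast
  moreover have "u = z \<oplus> (b1 \<oplus> b)" using b(3) by (auto simp: xor_set_def)
  ultimately show "u \<in> coset z (Bt t)" unfolding coset_def by blast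
next
  fix u assume "u \<in> coset z (Bt t)"
  then obtain b where b: "b \<in> Bt t" "u = z \<oplus> b" unfolding coset_def by blast
  have "z \<in> coset z (Bt s)" by (rule coset_self[OF subsp_boundaries])
  then show "u \<in> transfer n g h d eps k t (coset z (Bt s))"
    unfolding transfer_def using b by blast
qed

lemma ph_rep:
  assumes z0: "z0 \<in> Zt t"
  shows "ph t (coset z0 (Bt t)) = (\<lambda>\<tau>. t \<in> Ib \<tau> \<and> \<tau> \<in> coords z0)"
proof -
  define C where "C = coset z0 (Bt t)"
  have "z0 \<in> C" unfolding C_def by (rule coset_self[OF subsp_boundaries])
  then have "(SOME z. z \<in> C) \<in> C" by (rule someI)
  then obtain b where b: "b \<in> Bt t" "(SOME z. z \<in> C) = z0 \<oplus> b" unfolding C_def coset_def by blast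
  have z0f: "z0 \<in> Zf" using z0 Zt_Zf by blast
  have bf: "b \<in> Zf" using b(1) Bt_Zt Zt_Zf by blast
  have cz: "coords (SOME z. z \<in> C) = coords z0 \<oplus> coords b" using b(2) coords_lin[OF z0f bf] by simp
  have c0: "coords z0 \<subseteq> PZ" using coords_spec[OF z0f] by simp
  show ?thesis unfolding C_def[symmetric]
  proof (rule ext)
    fix \<tau>
    show "ph t C \<tau> = (t \<in> Ib \<tau> \<and> \<tau> \<in> coords z0)"
    proof (cases "t \<in> Ib \<tau>")
      case True
      have "\<tau> \<notin> coords b"
      proof
        assume "\<tau> \<in> coords b"
        then have "\<tau> \<in> PB \<and> dth \<tau> \<le> t" by (rule coords_Bt[OF b(1)])
        then show False using True by (simp add: Ib_def)
      qed
      then show ?thesis unfolding ph_def cz using True c0 by (auto simp: xor_mem)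
    next
      case False
      then show ?thesis unfolding ph_def by simp
    qed
  qed
qed

lemma hom_t: "homology n g d eps (level h t) k = (\<lambda>z. coset z (Bt t)) ` Zt t"
  by (rule homology_eq)

lemma decomp: "interval_decomposition n g h d eps k PZ Ib ph"
  unfolding interval_decomposition_def
proof (intro conjI allI ballI impI)
  show "finite PZ" by (rule finPZ)
next
  fix j assume j: "j \<in> PZ"
  show "real_interval (Ib j)" unfolding real_interval_def
  proof (intro conjI ballI allI impI)
    have "h j \<in> Ib j" using h_lt_dth by (simp add: Ib_def)
    then show "Ib j \<noteq> {}" by blast
  next
    fix a b x assume ab: "a \<in> Ib j" "b \<in> Ib j" "a \<le> x \<and> x \<le> b"
    then show "x \<in> Ib j" by (auto simp: Ib_def)
  qed
next
  fix t
  show "bij_betw (ph t) (homology n g d eps (level h t) k) {f. \<forall>j. f j \<longrightarrow> j \<in> PZ \<and> t \<in> Ib j}"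
    unfolding bij_betw_def
  proof
    show "inj_on (ph t) (homology n g d eps (level h t) k)"
    proof (rule inj_onI)
      fix C1 C2 assume C1: "C1 \<in> homology n g d eps (level h t) k" and C2: "C2 \<in> homology n g d eps (level h t) k"
        and eq: "ph t C1 = ph t C2"
      obtain z1 where z1: "z1 \<in> Zt t" "C1 = coset z1 (Bt t)" using C1 hom_t by auto
      obtain z2 where z2: "z2 \<in> Zt t" "C2 = coset z2 (Bt t)" using C2 hom_t by auto
      have e2: "\<And>\<tau>. (t \<in> Ib \<tau> \<and> \<tau> \<in> coords z1) = (t \<in> Ib \<tau> \<and> \<tau> \<in> coords z2)"
        using eq z1 z2 ph_rep by metis
      define w where "w = z1 \<oplus> z2"
      have wZ: "w \<in> Zt t" unfolding w_def using subsp_cycles z1 z2 unfolding subsp_def by blast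
      have cw: "coords w = coords z1 \<oplus> coords z2" unfolding w_def
        by (rule coords_lin) (use z1 z2 Zt_Zf in blast)+
      have wP: "coords w \<subseteq> PB" "\<forall>\<tau>\<in>coords w. dth \<tau> \<le> t"
      proof -
        have "\<tau> \<in> PB \<and> dth \<tau> \<le> t" if \<tau>: "\<tau> \<in> coords w" for \<tau>
        proof -
          have "h \<tau> \<le> t" by (rule coords_Zt[OF wZ \<tau>])
          moreover have "t \<notin> Ib \<tau>"
          proof
            assume "t \<in> Ib \<tau>"
            then have "(\<tau> \<in> coords z1) = (\<tau> \<in> coords z2)" using e2[of \<tau>] by simp
            then show False using \<tau> cw by (simp add: xor_mem)
          qed
          ultimately show ?thesis by (auto simp: Ib_def)
        qed
        then show "coords w \<subseteq> PB" "\<forall>\<tau>\<in>coords w. dth \<tau> \<le> t" by auto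
      qed
      have "psum ee (coords w) = w" using coords_spec wZ Zt_Zf by blast
      then have "w \<in> Bt t" using xsum_Bt[OF wP] by simp
      then have "coset z1 (Bt t) = coset z2 (Bt t)" using coset_eq_iff[OF subsp_boundaries] w_def by simp
      then show "C1 = C2" using z1 z2 by simp
    qed
  next
    show "ph t ` homology n g d eps (level h t) k = {f. \<forall>j. f j \<longrightarrow> j \<in> PZ \<and> t \<in> Ib j}"
    proof (rule set_eqI, rule iffI)
      fix f assume "f \<in> ph t ` homology n g d eps (level h t) k"
      then show "f \<in> {f. \<forall>j. f j \<longrightarrow> j \<in> PZ \<and> t \<in> Ib j}" by (auto simp: ph_def)
    next
      fix f assume f: "f \<in> {f. \<forall>j. f j \<longrightarrow> j \<in> PZ \<and> t \<in> Ib j}"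
      define S where "S = {\<tau>. f \<tau>}"
      have SP: "S \<subseteq> PZ" using f by (auto simp: S_def)
      have Sh: "\<forall>\<tau>\<in>S. h \<tau> \<le> t" using f by (auto simp: S_def Ib_def)
      define z where "z = psum ee S"
      have zZ: "z \<in> Zt t" unfolding z_def by (rule xsum_Zt[OF SP Sh])
      have cz: "coords z = S" unfolding z_def by (rule coords_xsum[OF SP])
      have "ph t (coset z (Bt t)) = f"
      proof (rule ext)
        fix \<tau> show "ph t (coset z (Bt t)) \<tau> = f \<tau>"
          using ph_rep[OF zZ] cz f by (auto simp: S_def)
      qed
      moreover have "coset z (Bt t) \<in> homology n g d eps (level h t) k" using zZ hom_t by simp
      ultimately show "f \<in> ph t ` homology n g d eps (level h t) k" by (metis image_eqI)
    qed
  qed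
next
  fix t C1 C2 assume C1: "C1 \<in> homology n g d eps (level h t) k" and C2: "C2 \<in> homology n g d eps (level h t) k"
  obtain z1 where z1: "z1 \<in> Zt t" "C1 = coset z1 (Bt t)" using C1 hom_t by auto
  obtain z2 where z2: "z2 \<in> Zt t" "C2 = coset z2 (Bt t)" using C2 hom_t by auto
  have cadd: "cadd C1 C2 = coset (z1 \<oplus> z2) (Bt t)" using z1 z2 cadd_coset[OF subsp_boundaries] by simp
  have wZ: "z1 \<oplus> z2 \<in> Zt t" using subsp_cycles z1 z2 unfolding subsp_def by blast
  have cw: "coords (z1 \<oplus> z2) = coords z1 \<oplus> coords z2"
    by (rule coords_lin) (use z1 z2 Zt_Zf in blast)+
  show "ph t (cadd C1 C2) = (\<lambda>j. ph t C1 j \<noteq> ph t C2 j)"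
    unfolding cadd ph_rep[OF wZ] cw using ph_rep[OF z1(1)] ph_rep[OF z2(1)] z1(2) z2(2)
    by (auto simp: xor_mem)
next
  fix s t C assume st: "s \<le> t" and C: "C \<in> homology n g d eps (level h s) k"
  obtain z where z: "z \<in> Zt s" "C = coset z (Bt s)" using C hom_t by auto
  have zt: "z \<in> Zt t" using z(1) cyc_mono[OF st] by blast
  have tr: "transfer n g h d eps k t C = coset z (Bt t)" using z(2) transfer_coset_e[OF st] by simp
  have "(t \<in> Ib \<tau> \<and> \<tau> \<in> coords z) = ((s \<in> Ib \<tau> \<and> \<tau> \<in> coords z) \<and> t \<in> Ib \<tau>)" for \<tau>
  proof (cases "\<tau> \<in> coords z \<and> t \<in> Ib \<tau>")
    case True
    have "h \<tau> \<le> s" using coords_Zt[OF z(1)] True by blast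
    then have "s \<in> Ib \<tau>" using True st by (auto simp: Ib_def)
    then show ?thesis using True by simp
  next
    case False then show ?thesis by auto
  qed
  then show "ph t (transfer n g h d eps k t C) = (\<lambda>j. ph s C j \<and> t \<in> Ib j)"
    unfolding tr ph_rep[OF zt] using ph_rep[OF z(1)] z(2) by (simp add: fun_eq_iff)
qed

end


theorem theorem6p1:
  fixes n :: nat and g :: "nat \<Rightarrow> int" and h :: "nat \<Rightarrow> real"
    and d :: "nat \<Rightarrow> nat list set" and eps :: "nat \<Rightarrow> bool"
  assumes "CE_dga n g h d"
    and "augmentation n g d eps"
  shows "(\<forall>k. \<exists>(J :: nat set) I \<phi>. interval_decomposition n g h d eps k J I \<phi>) \<and>
         (\<forall>J I \<phi>. (\<forall>k. interval_decomposition n g h d eps k (J k) (I k) (\<phi> k)) \<longrightarrow>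
            (\<forall>k. int (MC_coeff n g k) - int (PC_coeff n g d eps k)
                 = int (finite_bars (J (k - 1)) (I (k - 1))) + int (finite_bars (J k) (I k))))"
proof -
  have ce: "ce n g h d eps" by (rule ce.intro[OF assms])
  have P1: "\<forall>k. \<exists>(J :: nat set) I \<phi>. interval_decomposition n g h d eps k J I \<phi>"
  proof
    fix k
    interpret E: exk n g h d eps k by (rule exk.intro[OF ce])
    show "\<exists>(J :: nat set) I \<phi>. interval_decomposition n g h d eps k J I \<phi>"
      using E.decomp by blast
  qed
  have P2: "\<forall>J I \<phi>. (\<forall>k. interval_decomposition n g h d eps k (J k) (I k) (\<phi> k)) \<longrightarrow>
            (\<forall>k. int (MC_coeff n g k) - int (PC_coeff n g d eps k)
                 = int (finite_bars (J (k - 1)) (I (k - 1))) + int (finite_bars (J k) (I k)))"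
  proof (intro allI impI)
    fix J :: "int \<Rightarrow> nat set" and I :: "int \<Rightarrow> nat \<Rightarrow> real set"
      and \<phi> :: "int \<Rightarrow> real \<Rightarrow> nat set set \<Rightarrow> nat \<Rightarrow> bool" and k :: int
    assume H: "\<forall>k. interval_decomposition n g h d eps k (J k) (I k) (\<phi> k)"
    interpret C: ce n g h d eps by (rule ce)
    interpret D1: dec n g h d eps k "J k" "I k" "\<phi> k"
      by (rule dec.intro[OF ce dec_axioms.intro]) (use H in blast)
    interpret D0: dec n g h d eps "k - 1" "J (k - 1)" "I (k - 1)" "\<phi> (k - 1)"
      by (rule dec.intro[OF ce dec_axioms.intro]) (use H in blast)
    have b0: "card (boundaries n g d eps (\<lambda>_. True) (k - 1)) = 2 ^ finite_bars (J (k - 1)) (I (k - 1))"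
      by (rule D0.card_Bd_full)
    have b1: "card (boundaries n g d eps (\<lambda>_. True) k) = 2 ^ finite_bars (J k) (I k)"
      by (rule D1.card_Bd_full)
    have v1: "card (homology n g d eps (\<lambda>_. True) k) = 2 ^ PC_coeff n g d eps k"
      by (rule D1.card_V_full)
    have "(2::nat) ^ MC_coeff n g k = card (chains n g (\<lambda>_. True) k)"
      by (rule C.card_chains_full[symmetric])
    also have "\<dots> = card (boundaries n g d eps (\<lambda>_. True) (k - 1)) * card (cycles n g d eps (\<lambda>_. True) k)"
      by (rule C.full_counts)
    also have "\<dots> = 2 ^ finite_bars (J (k - 1)) (I (k - 1)) * (2 ^ PC_coeff n g d eps k * 2 ^ finite_bars (J k) (I k))"
      using C.card_cycles_full b0 b1 v1 by simp
    also have "\<dots> = 2 ^ (finite_bars (J (k - 1)) (I (k - 1)) + PC_coeff n g d eps k + finite_bars (J k) (I k))"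
      by (simp add: power_add)
    finally have "MC_coeff n g k = finite_bars (J (k - 1)) (I (k - 1)) + PC_coeff n g d eps k + finite_bars (J k) (I k)"
      by simp
    then show "int (MC_coeff n g k) - int (PC_coeff n g d eps k)
                 = int (finite_bars (J (k - 1)) (I (k - 1))) + int (finite_bars (J k) (I k))" by simp
  qed
  show ?thesis using P1 P2 by blast
qed


end
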